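(* Let $L_0\in\mathbb{R}^{n\times n}$ have reduced SVD $L_0=U\Sigma V^*$, let $S_0\in\mathbb{R}^{n\times n}$ with support $\Omega$, and let $\lambda>0$. Assume $\|\mathcal{P}_\Omega\mathcal{P}_T\|<1$. Then $(L_0,S_0)$ is the unique solution of \[ \text{minimize } \|L\|_*+\lambda\|S\|_1\quad\text{subject to}\quad L+S=L_0+S_0 \] if there is a pair $(W,F)$ of $n\times n$ matrices obeying \[ UV^*+W=\lambda(\mathrm{sgn}(S_0)+F), \] with $\mathcal{P}_TW=0$, $\|W\|<1$, $\mathcal{P}_\Omega F=0$ and $\|F\|_\infty<1$.
   Context: $U,V\in\mathbb{R}^{n\times r}$ have orthonormal columns. $T=\{UX^*+YV^*: X,Y\in\mathbb{R}^{n\times r}\}$ and $\mathcal{P}_T$ is the orthogonal projection onto $T$ with respect to the trace inner product $\langle X,Y\rangle=\mathrm{trace}(X^*Y)$. $\mathcal{P}_\Omega X$ keeps the entries of $X$ in $\Omega$ and zeroes the others. For linear maps on matrices, $\|\cdot\|$ is the operator norm with respect to the Frobenius norm; for matrices, $\|W\|$ is the spectral norm (largest singular value), $\|F\|_\infty=\max_{ij}|F_{ij}|$, $\|\cdot\|_*$ the nuclear norm and $\|S\|_1=\sum_{ij}|S_{ij}|$. $\mathrm{sgn}(S_0)$ is the entrywise sign, with $\mathrm{sgn}(0)=0$. *)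

theory Defs
  imports Complex_Main "Jordan_Normal_Form.Matrix"
begin

definition trace_inner :: "nat \<Rightarrow> real mat \<Rightarrow> real mat \<Rightarrow> real" where
  "trace_inner n X Y = (\<Sum>i<n. \<Sum>j<n. X $$ (i,j) * Y $$ (i,j))"
  (* = trace(X^* Y) for n x n matrices *)

definition frob_norm :: "nat \<Rightarrow> real mat \<Rightarrow> real" where
  "frob_norm n X = sqrt (trace_inner n X X)"

definition tangent_space :: "nat \<Rightarrow> nat \<Rightarrow> real mat \<Rightarrow> real mat \<Rightarrow> real mat set" where
  "tangent_space n r U V =
     {U * transpose_mat X + Y * transpose_mat V | X Y. X \<in> carrier_mat n r \<and> Y \<in> carrier_mat n r}"

definition orth_proj :: "nat \<Rightarrow> real mat set \<Rightarrow> real mat \<Rightarrow> real mat" where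
  "orth_proj n T X = (THE Y. Y \<in> T \<and> (\<forall>Z\<in>T. trace_inner n (X - Y) Z = 0))"

definition P_T :: "nat \<Rightarrow> nat \<Rightarrow> real mat \<Rightarrow> real mat \<Rightarrow> real mat \<Rightarrow> real mat" where
  "P_T n r U V = orth_proj n (tangent_space n r U V)"

definition P_Omega :: "nat \<Rightarrow> (nat \<times> nat) set \<Rightarrow> real mat \<Rightarrow> real mat" where
  "P_Omega n \<Omega> X = mat n n (\<lambda>(i,j). if (i,j) \<in> \<Omega> then X $$ (i,j) else 0)"

definition support :: "nat \<Rightarrow> real mat \<Rightarrow> (nat \<times> nat) set" where
  "support n S = {(i,j). i < n \<and> j < n \<and> S $$ (i,j) \<noteq> 0}"

definition map_op_norm :: "nat \<Rightarrow> (real mat \<Rightarrow> real mat) \<Rightarrow> real" where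
  "map_op_norm n \<A> = Sup {frob_norm n (\<A> X) | X. X \<in> carrier_mat n n \<and> frob_norm n X \<le> 1}"

definition vec_norm :: "real vec \<Rightarrow> real" where
  "vec_norm v = sqrt (v \<bullet> v)"

definition spec_norm :: "nat \<Rightarrow> real mat \<Rightarrow> real" where
  "spec_norm n W = Sup {vec_norm (W *\<^sub>v v) | v. v \<in> carrier_vec n \<and> vec_norm v \<le> 1}"

definition max_norm :: "nat \<Rightarrow> real mat \<Rightarrow> real" where
  "max_norm n F = Max (insert 0 {\<bar>F $$ (i,j)\<bar> | i j. i < n \<and> j < n})"

definition l1_norm :: "nat \<Rightarrow> real mat \<Rightarrow> real" where
  "l1_norm n S = (\<Sum>i<n. \<Sum>j<n. \<bar>S $$ (i,j)\<bar>)"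

definition nuclear_norm :: "nat \<Rightarrow> real mat \<Rightarrow> real" where
  "nuclear_norm n A = (SOME s. \<exists>P Q \<sigma>.
      P \<in> carrier_mat n n \<and> Q \<in> carrier_mat n n \<and>
      transpose_mat P * P = 1\<^sub>m n \<and> transpose_mat Q * Q = 1\<^sub>m n \<and>
      (\<forall>i<n. \<sigma> i \<ge> 0) \<and> A = P * mat_diag n \<sigma> * transpose_mat Q \<and>
      s = (\<Sum>i<n. \<sigma> i))"

definition sgn_mat :: "nat \<Rightarrow> real mat \<Rightarrow> real mat" where
  "sgn_mat n S = mat n n (\<lambda>(i,j). sgn (S $$ (i,j)))"

definition reduced_svd :: "nat \<Rightarrow> nat \<Rightarrow> real mat \<Rightarrow> real mat \<Rightarrow> real mat \<Rightarrow> real mat \<Rightarrow> bool" where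
  "reduced_svd n r L U \<Sigma> V \<longleftrightarrow>
     U \<in> carrier_mat n r \<and> V \<in> carrier_mat n r \<and> \<Sigma> \<in> carrier_mat r r \<and>
     transpose_mat U * U = 1\<^sub>m r \<and> transpose_mat V * V = 1\<^sub>m r \<and>
     diagonal_mat \<Sigma> \<and> (\<forall>i<r. \<Sigma> $$ (i,i) > 0) \<and>
     L = U * \<Sigma> * transpose_mat V"

definition unique_solution :: "nat \<Rightarrow> real \<Rightarrow> real mat \<Rightarrow> real mat \<Rightarrow> real mat \<Rightarrow> bool" where
  "unique_solution n lam M L0 S0 \<longleftrightarrow>
     L0 \<in> carrier_mat n n \<and> S0 \<in> carrier_mat n n \<and> L0 + S0 = M \<and>
     (\<forall>L S. L \<in> carrier_mat n n \<and> S \<in> carrier_mat n n \<and> L + S = M \<and> (L, S) \<noteq> (L0, S0) \<longrightarrow>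
        nuclear_norm n L0 + lam * l1_norm n S0 < nuclear_norm n L + lam * l1_norm n S)"

end

theory Submission
  imports Defs "Jordan_Normal_Form.Determinant" "HOL-Analysis.Function_Topology"
begin

lemma max_exists_fun:
  fixes g :: "(nat \<Rightarrow> real) \<Rightarrow> real" and q :: "nat \<Rightarrow> nat \<Rightarrow> real"
  assumes cont: "continuous_on UNIV g"
  shows "\<exists>f. (\<forall>i. i \<ge> n \<longrightarrow> f i = 0) \<and> (\<Sum>j<n. (f j)\<^sup>2) \<le> 1 \<and> (\<forall>i<k. (\<Sum>j<n. q i j * f j) = 0) \<and>
     (\<forall>h. (\<forall>i. i \<ge> n \<longrightarrow> h i = 0) \<and> (\<Sum>j<n. (h j)\<^sup>2) \<le> 1 \<and> (\<forall>i<k. (\<Sum>j<n. q i j * h j) = 0) \<longrightarrow> g h \<le> g f)"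
proof -
  define K where "K = PiE UNIV (\<lambda>i::nat. if i < n then {-1..1::real} else {0})"
  have "compactin (product_topology (\<lambda>i. euclidean) UNIV) K"
    unfolding K_def compactin_PiE by (intro disjI2 ballI) simp
  hence cK: "compact K" by (simp add: euclidean_product_topology)
  define D where "D = K \<inter> {f. (\<Sum>j<n. (f j)\<^sup>2) \<le> 1} \<inter> (\<Inter>i\<in>{..<k}. {f. (\<Sum>j<n. q i j * f j) = 0})"
  have cc: "\<And>j. continuous_on UNIV (\<lambda>f::nat\<Rightarrow>real. f j)" by simp
  have c1: "closed {f::nat\<Rightarrow>real. (\<Sum>j<n. (f j)\<^sup>2) \<le> 1}"
    by (intro closed_Collect_le continuous_on_sum continuous_on_power continuous_on_const cc)
  have c2: "closed (\<Inter>i\<in>{..<k}. {f::nat\<Rightarrow>real. (\<Sum>j<n. q i j * f j) = 0})"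
    by (intro closed_INT ballI closed_Collect_eq continuous_on_sum continuous_on_mult continuous_on_const cc)
  have cD: "compact D" unfolding D_def using cK c1 c2
    by (simp add: compact_Int_closed closed_Int Int_assoc)
  have z: "(\<lambda>_. 0) \<in> D" unfolding D_def K_def by auto
  from continuous_attains_sup[OF cD _ continuous_on_subset[OF cont]] z
  obtain f where f: "f \<in> D" "\<forall>h\<in>D. g h \<le> g f" by force
  have memD: "h \<in> D" if "\<forall>i. i \<ge> n \<longrightarrow> h i = 0" "(\<Sum>j<n. (h j)\<^sup>2) \<le> 1" "\<forall>i<k. (\<Sum>j<n. q i j * h j) = 0" for h
  proof -
    have "\<bar>h j\<bar> \<le> 1" if "j < n" for j
    proof -
      have "(h j)\<^sup>2 \<le> (\<Sum>j<n. (h j)\<^sup>2)"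
        by (rule member_le_sum) (use \<open>j<n\<close> in auto)
      hence "(h j)\<^sup>2 \<le> 1\<^sup>2" using that(1) \<open>_ \<le> 1\<close> by simp
      thus ?thesis using abs_le_square_iff[of "h j" 1] by simp
    qed
    hence "h \<in> K" unfolding K_def using that(1) by (auto simp: abs_le_iff not_less)
    thus ?thesis unfolding D_def using that by auto
  qed
  show ?thesis
  proof (rule exI[of _ f], intro conjI allI impI)
    have fK: "f \<in> K" using f(1) unfolding D_def by blast
    show "n \<le> i \<Longrightarrow> f i = 0" for i
    proof -
      assume "n \<le> i"
      have "f i \<in> (if i < n then {-1..1} else {0})" using fK unfolding K_def by blast
      thus ?thesis using \<open>n \<le> i\<close> by simp
    qed
    show "(\<Sum>j<n. (f j)\<^sup>2) \<le> 1" using f(1) unfolding D_def by blast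
    show "i < k \<Longrightarrow> (\<Sum>j<n. q i j * f j) = 0" for i using f(1) unfolding D_def by blast
    show "g h \<le> g f" if "(\<forall>i. n \<le> i \<longrightarrow> h i = 0) \<and> (\<Sum>j<n. (h j)\<^sup>2) \<le> 1 \<and> (\<forall>i<k. (\<Sum>j<n. q i j * h j) = 0)" for h
      using f(2) memD that by blast
  qed
qed

lemma sp_def': "(u::real vec) \<bullet> v = (\<Sum>i<dim_vec v. u $ i * v $ i)"
  unfolding scalar_prod_def by (simp add: lessThan_atLeast0)

lemma nsq_eq: "(v::real vec) \<bullet> v = (\<Sum>i<dim_vec v. (v $ i)\<^sup>2)"
  unfolding sp_def' by (simp add: power2_eq_square)

lemma nsq_ge0[simp]: "(v::real vec) \<bullet> v \<ge> 0"
  unfolding nsq_eq by (simp add: sum_nonneg)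

lemma nsq_zero: assumes "v \<in> carrier_vec n" "(v::real vec) \<bullet> v = 0" shows "v = 0\<^sub>v n"
proof -
  have "\<forall>i\<in>{..<dim_vec v}. (v $ i)\<^sup>2 = 0"
    using assms(2) unfolding nsq_eq by (subst sum_nonneg_eq_0_iff[symmetric]) auto
  thus ?thesis using assms(1) by (intro eq_vecI) auto
qed

lemma nsq_pos: assumes "v \<in> carrier_vec n" "v \<noteq> 0\<^sub>v n" shows "(v::real vec) \<bullet> v > 0"
proof -
  have "v \<bullet> v \<noteq> 0" using nsq_zero[OF assms(1)] assms(2) by blast
  thus ?thesis using nsq_ge0[of v] by linarith
qed

lemma cs_sum: fixes a b :: "nat \<Rightarrow> real"
  shows "(\<Sum>i\<in>I. a i * b i)\<^sup>2 \<le> (\<Sum>i\<in>I. (a i)\<^sup>2) * (\<Sum>i\<in>I. (b i)\<^sup>2)"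
proof -
  define A where "A = (\<Sum>i\<in>I. (a i)\<^sup>2)"
  define B where "B = (\<Sum>i\<in>I. (b i)\<^sup>2)"
  define C where "C = (\<Sum>i\<in>I. a i * b i)"
  have "0 \<le> (\<Sum>i\<in>I. (B * a i - C * b i)\<^sup>2)" by (simp add: sum_nonneg)
  also have "\<dots> = B * B * (\<Sum>i\<in>I. (a i)\<^sup>2) - 2 * B * C * (\<Sum>i\<in>I. a i * b i) + C * C * (\<Sum>i\<in>I. (b i)\<^sup>2)"
    by (simp add: power2_eq_square algebra_simps sum.distrib sum_subtractf sum_distrib_left)
  also have "\<dots> = B * B * A - 2 * B * C * C + C * C * B" unfolding A_def[symmetric] B_def[symmetric] C_def[symmetric] ..
  finally have *: "0 \<le> B * (A * B - C * C)" by (simp add: algebra_simps)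
  have B0: "B \<ge> 0" unfolding B_def by (simp add: sum_nonneg)
  show ?thesis
  proof (cases "B = 0")
    case True
    hence "\<forall>i\<in>I. (b i)\<^sup>2 = 0" if "finite I" using that unfolding B_def by (subst sum_nonneg_eq_0_iff[symmetric]) auto
    hence "C = 0" unfolding C_def by (cases "finite I") auto
    thus ?thesis using True unfolding A_def B_def C_def by simp
  next
    case False
    hence "B > 0" using B0 by simp
    hence "A * B - C * C \<ge> 0" using * by (simp add: zero_le_mult_iff)
    thus ?thesis unfolding A_def B_def C_def by (simp add: power2_eq_square algebra_simps)
  qed
qed

lemma cs_sq: assumes "u \<in> carrier_vec n" "v \<in> carrier_vec n"
  shows "((u::real vec) \<bullet> v)\<^sup>2 \<le> (u \<bullet> u) * (v \<bullet> v)"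
  using cs_sum[of "\<lambda>i. u $ i" "\<lambda>i. v $ i" "{..<n}"] assms
  unfolding sp_def' by (simp add: power2_eq_square)

lemma cs_abs: assumes "u \<in> carrier_vec n" "v \<in> carrier_vec n"
  shows "\<bar>(u::real vec) \<bullet> v\<bar> \<le> sqrt (u \<bullet> u) * sqrt (v \<bullet> v)"
  using real_sqrt_le_mono[OF cs_sq[OF assms]] by (simp add: real_sqrt_mult)

lemma mv_nsq: assumes M: "(M::real mat) \<in> carrier_mat m n" and v: "v \<in> carrier_vec n"
  shows "(M *\<^sub>v v) \<bullet> (M *\<^sub>v v) = v \<bullet> ((transpose_mat M * M) *\<^sub>v v)"
proof -
  have "(transpose_mat M * M) *\<^sub>v v = transpose_mat M *\<^sub>v (M *\<^sub>v v)" using M v by simp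
  hence "v \<bullet> ((transpose_mat M * M) *\<^sub>v v) = (transpose_mat M *\<^sub>v (M *\<^sub>v v)) \<bullet> v"
    using M v by (simp add: comm_scalar_prod[of _ n])
  also have "\<dots> = (M *\<^sub>v v) \<bullet> (M *\<^sub>v v)"
    by (rule transpose_vec_mult_scalar[OF M v]) (use M v in simp)
  finally show ?thesis by simp
qed

lemma mv_nsq_orth: assumes M: "(M::real mat) \<in> carrier_mat m n" and v: "v \<in> carrier_vec n"
  and O: "transpose_mat M * M = 1\<^sub>m n"
  shows "(M *\<^sub>v v) \<bullet> (M *\<^sub>v v) = v \<bullet> v"
  using mv_nsq[OF M v] O v by simp

lemma sp_mv: assumes M: "(M::real mat) \<in> carrier_mat m n" and v: "v \<in> carrier_vec n" and w: "w \<in> carrier_vec m"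
  shows "w \<bullet> (M *\<^sub>v v) = (transpose_mat M *\<^sub>v w) \<bullet> v"
  using transpose_vec_mult_scalar[OF M v w] by simp

lemma orth_exists_idx:
  assumes k: "k < n" and q: "\<And>i. i < k \<Longrightarrow> q i \<in> carrier_vec n"
  shows "\<exists>x\<in>carrier_vec n. x \<noteq> 0\<^sub>v n \<and> (\<forall>i<k. q i \<bullet> x = (0::real))"
proof -
  define c where "c i = (if i < k then q i else 0\<^sub>v n)" for i
  define M where "M = mat\<^sub>r n n (\<lambda>i. if i = k then 0\<^sub>v n else c i)"
  have cc: "c \<in> {0..<n} \<rightarrow> carrier_vec n" using q unfolding c_def by auto
  have "Determinant.det M = 0" unfolding M_def by (rule det_row_0[OF k cc])
  moreover have Mc: "M \<in> carrier_mat n n" unfolding M_def by simp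
  ultimately obtain v where v: "v \<in> carrier_vec n" "v \<noteq> 0\<^sub>v n" "M *\<^sub>v v = 0\<^sub>v n"
    using det_0_iff_vec_prod_zero_field[OF Mc] by blast
  have "q i \<bullet> v = 0" if i: "i < k" for i
  proof -
    have "(M *\<^sub>v v) $ i = 0" using v(3) i k by simp
    moreover have "row M i = q i" unfolding M_def using i k q[OF i] by (simp add: c_def)
    ultimately show ?thesis using i k Mc by simp
  qed
  thus ?thesis using v by blast
qed

lemma orth_exists_set:
  assumes fin: "finite Vs" and card: "card Vs < n" and Vs: "Vs \<subseteq> carrier_vec n"
  shows "\<exists>x\<in>carrier_vec n. x \<noteq> 0\<^sub>v n \<and> (\<forall>w\<in>Vs. w \<bullet> x = (0::real))"
proof -
  obtain vs where vs: "set vs = Vs" "distinct vs" using finite_distinct_list[OF fin] by blast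
  have len: "length vs = card Vs" using vs distinct_card by fastforce
  have "\<exists>x\<in>carrier_vec n. x \<noteq> 0\<^sub>v n \<and> (\<forall>i<length vs. vs ! i \<bullet> x = (0::real))"
    by (rule orth_exists_idx) (use card len Vs vs in auto)
  then show ?thesis using vs(1) by (metis in_set_conv_nth)
qed

lemma unit_exists_set:
  assumes fin: "finite Vs" and card: "card Vs < n" and Vs: "Vs \<subseteq> carrier_vec n"
  shows "\<exists>x\<in>carrier_vec n. x \<bullet> x = 1 \<and> (\<forall>w\<in>Vs. w \<bullet> x = (0::real))"
proof -
  obtain x where x: "x \<in> carrier_vec n" "x \<noteq> 0\<^sub>v n" "\<forall>w\<in>Vs. w \<bullet> x = (0::real)"
    using orth_exists_set[OF assms] by blast
  define c where "c = 1 / sqrt (x \<bullet> x)"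
  have pos: "x \<bullet> x > 0" using nsq_pos[OF x(1,2)] .
  have "(c \<cdot>\<^sub>v x) \<bullet> (c \<cdot>\<^sub>v x) = c * c * (x \<bullet> x)" using x(1) by simp
  also have "\<dots> = 1" unfolding c_def using pos by (simp add: power2_eq_square[symmetric] power_divide)
  finally show ?thesis using x Vs by (intro bexI[of _ "c \<cdot>\<^sub>v x"]) (auto simp: subset_iff)
qed

definition ON :: "nat \<Rightarrow> nat set \<Rightarrow> (nat \<Rightarrow> real vec) \<Rightarrow> bool" where
  "ON n I g \<longleftrightarrow> (\<forall>i\<in>I. g i \<in> carrier_vec n) \<and> (\<forall>i\<in>I. \<forall>j\<in>I. g i \<bullet> g j = (if i = j then 1 else 0))"

lemma ON_extend_aux:
  "\<forall>I g. I \<subseteq> {..<n} \<and> card ({..<n} - I) = d \<and> ON n I g \<longrightarrow> (\<exists>g'. (\<forall>i\<in>I. g' i = g i) \<and> ON n {..<n} g')"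
proof (induction d)
  case 0
  then show ?case by (auto intro!: exI)
next
  case (Suc d)
  show ?case
  proof (intro allI impI, elim conjE)
    fix I g assume I: "I \<subseteq> {..<n}" and cd: "card ({..<n} - I) = Suc d" and on: "ON n I g"
    obtain m where m: "m \<in> {..<n} - I" using cd by (metis card.empty ex_in_conv nat.distinct(1))
    have finI: "finite I" using I finite_subset by blast
    have cI: "card I < n"
    proof -
      have "card I < card {..<n}" using psubset_card_mono[of "{..<n}" I] I m by auto
      thus ?thesis by simp
    qed
    have "card (g ` I) < n" using card_image_le[OF finI, of g] cI by linarith
    moreover have "g ` I \<subseteq> carrier_vec n" using on unfolding ON_def by auto
    ultimately obtain x where x: "x \<in> carrier_vec n" "x \<bullet> x = 1" "\<forall>w\<in>g ` I. w \<bullet> x = 0"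
      using unit_exists_set[of "g ` I" n] finI by blast
    define g2 where "g2 = g(m := x)"
    have on2: "ON n (insert m I) g2"
      unfolding ON_def
    proof (intro conjI ballI)
      fix i assume "i \<in> insert m I" thus "g2 i \<in> carrier_vec n" using on x m unfolding g2_def ON_def by auto
    next
      fix i j assume i: "i \<in> insert m I" and j: "j \<in> insert m I"
      have gx: "g i \<bullet> x = 0" if "i \<in> I" for i using x(3) that by auto
      have xg: "x \<bullet> g i = 0" if "i \<in> I" for i
        using gx[OF that] comm_scalar_prod[of x n "g i"] x(1) on that unfolding ON_def by auto
      show "g2 i \<bullet> g2 j = (if i = j then 1 else 0)"
        using i j m on x(2) gx xg unfolding g2_def ON_def by auto
    qed
    have "card ({..<n} - insert m I) = d" using cd m
      by (metis Diff_insert card_Diff_singleton_if diff_Suc_1 finite_Diff finite_lessThan)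
    moreover have "insert m I \<subseteq> {..<n}" using I m by auto
    ultimately obtain g' where g': "\<forall>i\<in>insert m I. g' i = g2 i" "ON n {..<n} g'"
      using Suc.IH on2 by blast
    show "\<exists>g'. (\<forall>i\<in>I. g' i = g i) \<and> ON n {..<n} g'"
      using g' m unfolding g2_def by (intro exI[of _ g']) auto
  qed
qed

lemma ON_extend: assumes "I \<subseteq> {..<n}" "ON n I g"
  shows "\<exists>g'. (\<forall>i\<in>I. g' i = g i) \<and> ON n {..<n} g'"
  using ON_extend_aux assms by blast

lemma quad_zero: fixes a b :: real assumes "\<forall>t. 2*t*a + t\<^sup>2*b \<le> 0" shows "a = 0"
proof -
  define t where "t = a / (\<bar>b\<bar> + 1)"
  have d: "\<bar>b\<bar> + 1 > 0" by simp
  have "2*t*a + t\<^sup>2*b \<le> 0" using assms by blast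
  hence "(2*t*a + t\<^sup>2*b) * (\<bar>b\<bar> + 1)\<^sup>2 \<le> 0" by (simp add: mult_nonpos_nonneg)
  also have "(2*t*a + t\<^sup>2*b) * (\<bar>b\<bar> + 1)\<^sup>2 = a\<^sup>2 * (2*(\<bar>b\<bar>+1) + b)"
  proof -
    have gen: "c \<noteq> 0 \<Longrightarrow> (2*(a/c)*a + (a/c)\<^sup>2*b) * c\<^sup>2 = a\<^sup>2 * (2*c+b)" for c :: real
      by (simp add: field_simps power2_eq_square)
    show ?thesis unfolding t_def using gen[of "\<bar>b\<bar>+1"] d by simp
  qed
  finally have "a\<^sup>2 * (2*(\<bar>b\<bar>+1) + b) \<le> 0" .
  moreover have "2*(\<bar>b\<bar>+1) + b > 0" by (cases "b \<ge> 0") auto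
  ultimately have "a\<^sup>2 \<le> 0" by (simp add: mult_le_0_iff)
  thus ?thesis by simp
qed

lemma nsq_mv_sum: assumes A: "(A::real mat) \<in> carrier_mat n n" and w: "w \<in> carrier_vec n"
  shows "(A *\<^sub>v w) \<bullet> (A *\<^sub>v w) = (\<Sum>i<n. (\<Sum>j<n. A $$ (i,j) * w $ j)\<^sup>2)"
proof -
  have "(A *\<^sub>v w) \<bullet> (A *\<^sub>v w) = (\<Sum>i<n. ((A *\<^sub>v w) $ i)\<^sup>2)" using A by (simp add: nsq_eq)
  also have "\<dots> = (\<Sum>i<n. (\<Sum>j<n. A $$ (i,j) * w $ j)\<^sup>2)"
    by (rule sum.cong) (use A w in \<open>auto simp: sp_def'\<close>)
  finally show ?thesis .
qed

lemma max_exists_vec: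
  fixes k :: nat and q :: "nat \<Rightarrow> real vec"
  assumes A: "(A::real mat) \<in> carrier_mat n n" and q: "\<And>i. i < k \<Longrightarrow> q i \<in> carrier_vec n"
  shows "\<exists>v\<in>carrier_vec n. (\<forall>i<k. q i \<bullet> v = 0) \<and> v \<bullet> v \<le> 1 \<and>
    (\<forall>w\<in>carrier_vec n. (\<forall>i<k. q i \<bullet> w = 0) \<and> w \<bullet> w \<le> 1 \<longrightarrow> (A *\<^sub>v w) \<bullet> (A *\<^sub>v w) \<le> (A *\<^sub>v v) \<bullet> (A *\<^sub>v v))"
proof -
  define g where "g f = (\<Sum>i<n. (\<Sum>j<n. A $$ (i,j) * f j)\<^sup>2)" for f :: "nat \<Rightarrow> real"
  have cc: "\<And>j. continuous_on UNIV (\<lambda>f::nat\<Rightarrow>real. f j)" by simp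
  have cont: "continuous_on UNIV g" unfolding g_def
    by (intro continuous_on_sum continuous_on_power continuous_on_mult continuous_on_const cc)
  obtain f where f: "(\<forall>i. i \<ge> n \<longrightarrow> f i = 0)" "(\<Sum>j<n. (f j)\<^sup>2) \<le> 1" "(\<forall>i<k. (\<Sum>j<n. q i $ j * f j) = 0)"
    "\<forall>h. (\<forall>i. i \<ge> n \<longrightarrow> h i = 0) \<and> (\<Sum>j<n. (h j)\<^sup>2) \<le> 1 \<and> (\<forall>i<k. (\<Sum>j<n. q i $ j * h j) = 0) \<longrightarrow> g h \<le> g f"
    using max_exists_fun[OF cont, where n=n and k=k and q="\<lambda>i j. q i $ j"] by blast
  define v where "v = vec n f"
  have v: "v \<in> carrier_vec n" unfolding v_def by simp
  have conv1: "(x::real vec) \<bullet> x = (\<Sum>j<n. (x $ j)\<^sup>2)" if "x \<in> carrier_vec n" for x using that nsq_eq[of x] by simp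
  have conv2: "q i \<bullet> (x::real vec) = (\<Sum>j<n. q i $ j * x $ j)" if "x \<in> carrier_vec n" for x i using that by (simp add: sp_def')
  have conv3: "(A *\<^sub>v x) \<bullet> (A *\<^sub>v x) = g (\<lambda>j. x $ j)" if "x \<in> carrier_vec n" for x
    using nsq_mv_sum[OF A that] unfolding g_def .
  have vf: "(\<Sum>j<n. F j (v $ j)) = (\<Sum>j<n. F j (f j))" for F :: "nat \<Rightarrow> real \<Rightarrow> real"
    by (rule sum.cong) (auto simp: v_def)
  have gv: "g (\<lambda>j. v $ j) = g f" unfolding g_def by (rule sum.cong) (auto simp: v_def)
  show ?thesis
  proof (intro bexI[OF _ v] conjI allI impI ballI)
    show "i < k \<Longrightarrow> q i \<bullet> v = 0" for i using f(3) conv2[OF v, of i] vf[of "\<lambda>j x. q i $ j * x"] by simp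
    show "v \<bullet> v \<le> 1" using f(2) conv1[OF v] vf[of "\<lambda>j x. x\<^sup>2"] by simp
    fix w assume w: "w \<in> carrier_vec n" and hw: "(\<forall>i<k. q i \<bullet> w = 0) \<and> w \<bullet> w \<le> 1"
    define h where "h j = (if j < n then w $ j else 0)" for j
    have hw': "(\<Sum>j<n. F j (w $ j)) = (\<Sum>j<n. F j (h j))" for F :: "nat \<Rightarrow> real \<Rightarrow> real"
      by (rule sum.cong) (auto simp: h_def)
    have gh: "g (\<lambda>j. w $ j) = g h" unfolding g_def by (rule sum.cong) (auto simp: h_def)
    have "g h \<le> g f"
    proof (rule f(4)[rule_format], intro conjI allI impI)
      show "n \<le> i \<Longrightarrow> h i = 0" for i by (simp add: h_def)
      show "(\<Sum>j<n. (h j)\<^sup>2) \<le> 1" using hw conv1[OF w] hw'[of "\<lambda>j x. x\<^sup>2"] by simp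
      show "i < k \<Longrightarrow> (\<Sum>j<n. q i $ j * h j) = 0" for i using hw conv2[OF w, of i] hw'[of "\<lambda>j x. q i $ j * x"] by simp
    qed
    thus "(A *\<^sub>v w) \<bullet> (A *\<^sub>v w) \<le> (A *\<^sub>v v) \<bullet> (A *\<^sub>v v)" using conv3[OF w] conv3[OF v] gh gv by simp
  qed
qed

lemma nsq_add_smult: assumes x: "x \<in> carrier_vec n" and y: "y \<in> carrier_vec n"
  shows "(x + t \<cdot>\<^sub>v y) \<bullet> (x + t \<cdot>\<^sub>v y) = x \<bullet> x + 2 * t * (x \<bullet> y) + t\<^sup>2 * ((y::real vec) \<bullet> y)"
proof -
  have ty: "t \<cdot>\<^sub>v y \<in> carrier_vec n" using y by simp
  have "(x + t \<cdot>\<^sub>v y) \<bullet> (x + t \<cdot>\<^sub>v y) = x \<bullet> (x + t \<cdot>\<^sub>v y) + (t \<cdot>\<^sub>v y) \<bullet> (x + t \<cdot>\<^sub>v y)"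
    using add_scalar_prod_distrib[OF x ty, of "x + t \<cdot>\<^sub>v y"] x y by simp
  also have "\<dots> = x \<bullet> x + x \<bullet> (t \<cdot>\<^sub>v y) + ((t \<cdot>\<^sub>v y) \<bullet> x + (t \<cdot>\<^sub>v y) \<bullet> (t \<cdot>\<^sub>v y))"
    using scalar_prod_add_distrib[OF x x ty] scalar_prod_add_distrib[OF ty x ty] by simp
  also have "\<dots> = x \<bullet> x + t * (x \<bullet> y) + (t * (y \<bullet> x) + t * t * (y \<bullet> y))"
    using x y by simp
  also have "y \<bullet> x = x \<bullet> y" using comm_scalar_prod[OF y x] .
  finally show ?thesis by (simp add: power2_eq_square algebra_simps)
qed

lemma sp_add_smult: assumes x: "x \<in> carrier_vec n" and y: "y \<in> carrier_vec n" and z: "z \<in> carrier_vec n"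
  shows "z \<bullet> (x + t \<cdot>\<^sub>v y) = z \<bullet> x + t * ((z::real vec) \<bullet> y)"
  using scalar_prod_add_distrib[OF z x, of "t \<cdot>\<^sub>v y"] x y z by simp

lemma mv_zero: assumes A: "(A::real mat) \<in> carrier_mat m n" shows "A *\<^sub>v 0\<^sub>v n = 0\<^sub>v m"
  by (rule eq_vecI) (use A in \<open>auto simp: row_def\<close>)

lemma svd_q_aux:
  assumes A: "(A::real mat) \<in> carrier_mat n n"
  shows "k \<le> n \<Longrightarrow> \<exists>q. ON n {..<k} q \<and> (\<forall>i<k. \<forall>w\<in>carrier_vec n. (\<forall>j\<le>i. q j \<bullet> w = 0) \<longrightarrow> (A *\<^sub>v q i) \<bullet> (A *\<^sub>v w) = 0)"
proof (induction k)
  case 0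
  then show ?case by (auto simp: ON_def)
next
  case (Suc k)
  hence kn: "k < n" by simp
  from Suc obtain q where on: "ON n {..<k} q"
    and inv: "\<forall>i<k. \<forall>w\<in>carrier_vec n. (\<forall>j\<le>i. q j \<bullet> w = 0) \<longrightarrow> (A *\<^sub>v q i) \<bullet> (A *\<^sub>v w) = 0" by auto
  have qc: "\<And>i. i < k \<Longrightarrow> q i \<in> carrier_vec n" using on unfolding ON_def by auto
  from max_exists_vec[OF A qc] obtain v where v1: "v \<in> carrier_vec n" and v2: "(\<forall>i<k. q i \<bullet> v = 0) \<and> v \<bullet> v \<le> 1 \<and>
    (\<forall>w\<in>carrier_vec n. (\<forall>i<k. q i \<bullet> w = 0) \<and> w \<bullet> w \<le> 1 \<longrightarrow> (A *\<^sub>v w) \<bullet> (A *\<^sub>v w) \<le> (A *\<^sub>v v) \<bullet> (A *\<^sub>v v))"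
    by (rule bexE)
  have v: "v \<in> carrier_vec n" "\<forall>i<k. q i \<bullet> v = 0" "v \<bullet> v \<le> 1" using v1 v2 by auto
  have vmax: "\<forall>w\<in>carrier_vec n. (\<forall>i<k. q i \<bullet> w = 0) \<and> w \<bullet> w \<le> 1 \<longrightarrow> (A *\<^sub>v w) \<bullet> (A *\<^sub>v w) \<le> (A *\<^sub>v v) \<bullet> (A *\<^sub>v v)"
    using v2 by blast
  define \<mu> where "\<mu> = (A *\<^sub>v v) \<bullet> (A *\<^sub>v v)"
  have hom: "(A *\<^sub>v w) \<bullet> (A *\<^sub>v w) \<le> \<mu> * (w \<bullet> w)" if w: "w \<in> carrier_vec n" "\<forall>i<k. q i \<bullet> w = 0" for w
  proof (cases "w \<bullet> w = 0")
    case True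
    hence "w = 0\<^sub>v n" using nsq_zero[OF w(1)] by blast
    thus ?thesis using A True mv_zero[OF A] by simp
  next
    case False
    hence pos: "w \<bullet> w > 0" using nsq_ge0[of w] by linarith
    define c where "c = 1 / sqrt (w \<bullet> w)"
    have c2: "c * c * (w \<bullet> w) = 1" unfolding c_def using pos by (simp add: power2_eq_square[symmetric] power_divide)
    have "(c \<cdot>\<^sub>v w) \<bullet> (c \<cdot>\<^sub>v w) = c * c * (w \<bullet> w)" using w by simp
    moreover have "\<forall>i<k. q i \<bullet> (c \<cdot>\<^sub>v w) = 0" using w qc by simp
    ultimately have "(A *\<^sub>v (c \<cdot>\<^sub>v w)) \<bullet> (A *\<^sub>v (c \<cdot>\<^sub>v w)) \<le> \<mu>"
      using vmax w(1) c2 unfolding \<mu>_def by simp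
    moreover have "(A *\<^sub>v (c \<cdot>\<^sub>v w)) \<bullet> (A *\<^sub>v (c \<cdot>\<^sub>v w)) = c * c * ((A *\<^sub>v w) \<bullet> (A *\<^sub>v w))"
      using A w by (simp add: mult_mat_vec)
    ultimately have "c * c * ((A *\<^sub>v w) \<bullet> (A *\<^sub>v w)) \<le> \<mu>" by simp
    hence "(w \<bullet> w) * (c * c * ((A *\<^sub>v w) \<bullet> (A *\<^sub>v w))) \<le> (w \<bullet> w) * \<mu>"
      using pos by (simp add: mult_left_mono)
    moreover have "(w \<bullet> w) * (c * c * ((A *\<^sub>v w) \<bullet> (A *\<^sub>v w))) = (c * c * (w \<bullet> w)) * ((A *\<^sub>v w) \<bullet> (A *\<^sub>v w))"
      by (simp add: algebra_simps)
    ultimately have "(c * c * (w \<bullet> w)) * ((A *\<^sub>v w) \<bullet> (A *\<^sub>v w)) \<le> (w \<bullet> w) * \<mu>" by linarith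
    thus ?thesis unfolding c2 by (simp add: mult.commute)
  qed
  obtain u where u: "u \<in> carrier_vec n" "\<forall>i<k. q i \<bullet> u = 0" "u \<bullet> u = 1"
    and umax: "\<And>w. w \<in> carrier_vec n \<Longrightarrow> \<forall>i<k. q i \<bullet> w = 0 \<Longrightarrow> (A *\<^sub>v w) \<bullet> (A *\<^sub>v w) \<le> ((A *\<^sub>v u) \<bullet> (A *\<^sub>v u)) * (w \<bullet> w)"
  proof (cases "\<mu> = 0")
    case True
    have "card (q ` {..<k}) < n" using card_image_le[of "{..<k}" q] kn by simp
    then obtain x where x: "x \<in> carrier_vec n" "x \<bullet> x = 1" "\<forall>w\<in>q ` {..<k}. w \<bullet> x = 0"
      using unit_exists_set[of "q ` {..<k}" n] qc by auto
    have "(A *\<^sub>v x) \<bullet> (A *\<^sub>v x) \<le> 0" using hom[OF x(1)] x True by simp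
    hence ax: "(A *\<^sub>v x) \<bullet> (A *\<^sub>v x) = 0" using nsq_ge0[of "A *\<^sub>v x"] by linarith
    show ?thesis
      by (rule that[OF x(1) _ x(2)]) (use x(3) hom True ax in auto)
  next
    case False
    hence mpos: "\<mu> > 0" unfolding \<mu>_def using nsq_ge0[of "A *\<^sub>v v"] by linarith
    have "\<mu> \<le> \<mu> * (v \<bullet> v)" using hom[OF v(1,2)] unfolding \<mu>_def by simp
    hence "v \<bullet> v \<ge> 1" using mpos by simp
    hence "v \<bullet> v = 1" using v(3) by simp
    thus ?thesis by (rule that[OF v(1,2)]) (use hom in \<open>simp add: \<mu>_def\<close>)
  qed
  define \<mu>' where "\<mu>' = (A *\<^sub>v u) \<bullet> (A *\<^sub>v u)"
  have perp: "(A *\<^sub>v u) \<bullet> (A *\<^sub>v w) = 0" if w: "w \<in> carrier_vec n" "\<forall>i<k. q i \<bullet> w = 0" "u \<bullet> w = 0" for w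
  proof (rule quad_zero, rule allI)
    fix t :: real
    define x where "x = u + t \<cdot>\<^sub>v w"
    have xc: "x \<in> carrier_vec n" unfolding x_def using u w by simp
    have "\<forall>i<k. q i \<bullet> x = 0" unfolding x_def using sp_add_smult[OF u(1) w(1)] qc u w by simp
    hence "(A *\<^sub>v x) \<bullet> (A *\<^sub>v x) \<le> \<mu>' * (x \<bullet> x)" using umax[OF xc] unfolding \<mu>'_def by blast
    moreover have "x \<bullet> x = 1 + t\<^sup>2 * (w \<bullet> w)" unfolding x_def using nsq_add_smult[OF u(1) w(1)] u w by simp
    moreover have "A *\<^sub>v x = A *\<^sub>v u + t \<cdot>\<^sub>v (A *\<^sub>v w)" unfolding x_def using A u w
      by (simp add: mult_add_distrib_mat_vec mult_mat_vec)
    moreover have "(A *\<^sub>v u + t \<cdot>\<^sub>v (A *\<^sub>v w)) \<bullet> (A *\<^sub>v u + t \<cdot>\<^sub>v (A *\<^sub>v w)) =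
       \<mu>' + 2 * t * ((A *\<^sub>v u) \<bullet> (A *\<^sub>v w)) + t\<^sup>2 * ((A *\<^sub>v w) \<bullet> (A *\<^sub>v w))"
      unfolding \<mu>'_def by (rule nsq_add_smult[where n=n]) (use A u w in auto)
    ultimately show "2 * t * ((A *\<^sub>v u) \<bullet> (A *\<^sub>v w)) + t\<^sup>2 * ((A *\<^sub>v w) \<bullet> (A *\<^sub>v w) - \<mu>' * (w \<bullet> w)) \<le> 0"
      by (simp add: algebra_simps)
  qed
  define q' where "q' = q(k := u)"
  have uq: "u \<bullet> q i = 0" if "i < k" for i using u(2) that comm_scalar_prod[OF u(1) qc[OF that]] by simp
  have on': "ON n {..<Suc k} q'"
    unfolding ON_def
  proof (intro conjI ballI)
    fix i assume "i \<in> {..<Suc k}" thus "q' i \<in> carrier_vec n" using qc u(1) unfolding q'_def by (auto simp: less_Suc_eq)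
  next
    fix i j assume i: "i \<in> {..<Suc k}" and j: "j \<in> {..<Suc k}"
    have onq: "q i \<bullet> q j = (if i = j then 1 else 0)" if "i < k" "j < k" for i j using on that unfolding ON_def by auto
    show "q' i \<bullet> q' j = (if i = j then 1 else 0)"
      using i j onq uq u(2,3) unfolding q'_def by (auto simp: less_Suc_eq)
  qed
  show ?case
  proof (intro exI[of _ q'] conjI on' allI impI ballI)
    fix i w assume i: "i < Suc k" and w: "w \<in> carrier_vec n" and hw: "\<forall>j\<le>i. q' j \<bullet> w = 0"
    show "(A *\<^sub>v q' i) \<bullet> (A *\<^sub>v w) = 0"
    proof (cases "i < k")
      case True
      have "\<forall>j\<le>i. q j \<bullet> w = 0" using hw True unfolding q'_def by auto
      thus ?thesis using inv True w unfolding q'_def by auto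
    next
      case False
      hence ik: "i = k" using i by simp
      have "\<forall>j<k. q j \<bullet> w = 0"
      proof (intro allI impI)
        fix j assume "j < k" thus "q j \<bullet> w = 0" using hw[rule_format, of j] ik unfolding q'_def by simp
      qed
      moreover have "u \<bullet> w = 0" using hw ik unfolding q'_def by auto
      ultimately show ?thesis using perp[OF w] ik unfolding q'_def by simp
    qed
  qed
qed

definition mof :: "nat \<Rightarrow> (nat \<Rightarrow> real vec) \<Rightarrow> real mat" where
  "mof n f = mat n n (\<lambda>(i,j). f j $ i)"

lemma mof_carrier[simp]: "mof n f \<in> carrier_mat n n" unfolding mof_def by simp
lemma mof_dim[simp]: "dim_row (mof n f) = n" "dim_col (mof n f) = n" unfolding mof_def by simp_all

lemma col_mof: assumes "j < n" "f j \<in> carrier_vec n" shows "col (mof n f) j = f j"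
  by (rule eq_vecI) (use assms in \<open>auto simp: mof_def\<close>)

lemma mof_orth: assumes "ON n {..<n} f" shows "transpose_mat (mof n f) * mof n f = 1\<^sub>m n"
proof (rule eq_matI)
  fix i j assume i: "i < dim_row (1\<^sub>m n)" and j: "j < dim_col (1\<^sub>m n)"
  have fi: "f i \<in> carrier_vec n" "f j \<in> carrier_vec n" using assms i j unfolding ON_def by auto
  have "(transpose_mat (mof n f) * mof n f) $$ (i,j) = col (mof n f) i \<bullet> col (mof n f) j"
    using i j by simp
  also have "\<dots> = f i \<bullet> f j" using i j fi by (simp add: col_mof)
  also have "\<dots> = 1\<^sub>m n $$ (i,j)" using assms i j unfolding ON_def by auto
  finally show "(transpose_mat (mof n f) * mof n f) $$ (i,j) = 1\<^sub>m n $$ (i,j)" .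
qed auto

lemma orth_right: assumes Q: "(Q::real mat) \<in> carrier_mat n n" and O: "transpose_mat Q * Q = 1\<^sub>m n"
  shows "Q * transpose_mat Q = 1\<^sub>m n"
  using mat_mult_left_right_inverse[of "transpose_mat Q" n Q] Q O by simp

lemma svd_exists:
  assumes A: "(A::real mat) \<in> carrier_mat n n"
  shows "\<exists>P Q \<sigma>. P \<in> carrier_mat n n \<and> Q \<in> carrier_mat n n \<and>
      transpose_mat P * P = 1\<^sub>m n \<and> transpose_mat Q * Q = 1\<^sub>m n \<and>
      (\<forall>i<n. \<sigma> i \<ge> 0) \<and> A = P * mat_diag n \<sigma> * transpose_mat Q"
proof -
  obtain q where onq: "ON n {..<n} q"
    and inv: "\<forall>i<n. \<forall>w\<in>carrier_vec n. (\<forall>j\<le>i. q j \<bullet> w = 0) \<longrightarrow> (A *\<^sub>v q i) \<bullet> (A *\<^sub>v w) = 0"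
    using svd_q_aux[OF A, of n] by auto
  have qc: "q i \<in> carrier_vec n" if "i < n" for i using onq that unfolding ON_def by auto
  have qq: "q i \<bullet> q j = (if i = j then 1 else 0)" if "i < n" "j < n" for i j using onq that unfolding ON_def by auto
  have lt: "(A *\<^sub>v q i) \<bullet> (A *\<^sub>v q j) = 0" if "i < j" "j < n" for i j
    using inv[rule_format, of i "q j"] that qq qc by auto
  have ortho: "(A *\<^sub>v q i) \<bullet> (A *\<^sub>v q j) = 0" if "i \<noteq> j" "i < n" "j < n" for i j
  proof (cases "i < j")
    case True thus ?thesis using lt that by auto
  next
    case False
    hence "(A *\<^sub>v q j) \<bullet> (A *\<^sub>v q i) = 0" using lt that by auto
    thus ?thesis using comm_scalar_prod[of "A *\<^sub>v q i" n "A *\<^sub>v q j"] A qc[OF that(2)] qc[OF that(3)] by simp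
  qed
  define \<sigma> where "\<sigma> i = sqrt ((A *\<^sub>v q i) \<bullet> (A *\<^sub>v q i))" for i
  have s0: "\<sigma> i \<ge> 0" for i unfolding \<sigma>_def by simp
  have ssq: "\<sigma> i * \<sigma> i = (A *\<^sub>v q i) \<bullet> (A *\<^sub>v q i)" for i unfolding \<sigma>_def by simp
  define I where "I = {i. i < n \<and> \<sigma> i > 0}"
  define p0 where "p0 i = (1 / \<sigma> i) \<cdot>\<^sub>v (A *\<^sub>v q i)" for i
  have onp0: "ON n I p0" unfolding ON_def
  proof (intro conjI ballI)
    fix i assume "i \<in> I" thus "p0 i \<in> carrier_vec n" using A qc[of i] unfolding p0_def I_def by simp
  next
    fix i j assume i: "i \<in> I" and j: "j \<in> I"
    have "p0 i \<bullet> p0 j = (1 / \<sigma> i) * (1 / \<sigma> j) * ((A *\<^sub>v q i) \<bullet> (A *\<^sub>v q j))"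
      using A qc[of i] qc[of j] i j unfolding p0_def I_def by simp
    also have "\<dots> = (if i = j then 1 else 0)"
    proof (cases "i = j")
      case True thus ?thesis using i unfolding I_def by (simp flip: ssq)
    next
      case False thus ?thesis using ortho i j unfolding I_def by simp
    qed
    finally show "p0 i \<bullet> p0 j = (if i = j then 1 else 0)" .
  qed
  obtain p where pI: "\<forall>i\<in>I. p i = p0 i" and onp: "ON n {..<n} p"
    using ON_extend[OF _ onp0] unfolding I_def by auto
  have pc: "p i \<in> carrier_vec n" if "i < n" for i using onp that unfolding ON_def by auto
  define P where "P = mof n p"
  define Q where "Q = mof n q"
  have P: "P \<in> carrier_mat n n" and Q: "Q \<in> carrier_mat n n" unfolding P_def Q_def by auto
  have PO: "transpose_mat P * P = 1\<^sub>m n" unfolding P_def by (rule mof_orth[OF onp])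
  have QO: "transpose_mat Q * Q = 1\<^sub>m n" unfolding Q_def by (rule mof_orth[OF onq])
  have Aq: "A *\<^sub>v q j = \<sigma> j \<cdot>\<^sub>v p j" if j: "j < n" for j
  proof (cases "\<sigma> j > 0")
    case True
    hence "p j = p0 j" using pI j unfolding I_def by auto
    thus ?thesis using True A qc[OF j] unfolding p0_def by (simp add: smult_smult_assoc)
  next
    case False
    hence "\<sigma> j = 0" using s0[of j] by simp
    hence "(A *\<^sub>v q j) \<bullet> (A *\<^sub>v q j) = 0" using ssq[of j] by simp
    hence "A *\<^sub>v q j = 0\<^sub>v n" using nsq_zero[of "A *\<^sub>v q j" n] A qc[OF j] by simp
    thus ?thesis using \<open>\<sigma> j = 0\<close> pc[OF j] by auto
  qed
  have AQ: "A * Q = P * mat_diag n \<sigma>"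
  proof (rule eq_matI)
    fix i j assume i: "i < dim_row (P * mat_diag n \<sigma>)" and j: "j < dim_col (P * mat_diag n \<sigma>)"
    hence i': "i < n" and j': "j < n" using P mat_diag_dim[of n \<sigma>] by auto
    have "(A * Q) $$ (i,j) = row A i \<bullet> col Q j" using A Q i' j' by simp
    also have "\<dots> = (A *\<^sub>v q j) $ i" unfolding Q_def using A i' j' qc[OF j'] by (simp add: col_mof)
    also have "\<dots> = \<sigma> j * p j $ i" using Aq[OF j'] pc[OF j'] i' by simp
    also have "\<dots> = (P * mat_diag n \<sigma>) $$ (i,j)"
      unfolding mat_diag_mult_right[OF P] using i' j' by (simp add: P_def mof_def)
    finally show "(A * Q) $$ (i,j) = (P * mat_diag n \<sigma>) $$ (i,j)" .
  qed (use A Q P in \<open>simp_all add: mat_diag_def\<close>)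
  have "A = A * (Q * transpose_mat Q)" using orth_right[OF Q QO] A by simp
  also have "\<dots> = (A * Q) * transpose_mat Q" using A Q by (simp add: assoc_mult_mat)
  also have "\<dots> = P * mat_diag n \<sigma> * transpose_mat Q" unfolding AQ ..
  finally have "A = P * mat_diag n \<sigma> * transpose_mat Q" .
  thus ?thesis using P Q PO QO s0 by (intro exI[of _ P] exI[of _ Q] exI[of _ \<sigma>]) simp
qed

definition contr :: "nat \<Rightarrow> real \<Rightarrow> real mat \<Rightarrow> bool" where
  "contr n c Z \<longleftrightarrow> Z \<in> carrier_mat n n \<and> (\<forall>v\<in>carrier_vec n. (Z *\<^sub>v v) \<bullet> (Z *\<^sub>v v) \<le> c\<^sup>2 * (v \<bullet> v))"

lemma entry_XDY:
  fixes X Y :: "real mat"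
  assumes X: "X \<in> carrier_mat n m" and Y: "Y \<in> carrier_mat n m" and i: "i < n" and j: "j < n"
  shows "(X * mat_diag m s * transpose_mat Y) $$ (i,j) = (\<Sum>k<m. X $$ (i,k) * s k * Y $$ (j,k))"
proof -
  have "X * mat_diag m s = mat n m (\<lambda>(i,k). X $$ (i,k) * s k)" by (rule mat_diag_mult_right[OF X])
  moreover have "(mat n m (\<lambda>(i,k). X $$ (i,k) * s k) * transpose_mat Y) $$ (i,j) = (\<Sum>k<m. X $$ (i,k) * s k * Y $$ (j,k))"
  proof -
    have "(mat n m (\<lambda>(i,k). X $$ (i,k) * s k) * transpose_mat Y) $$ (i,j) = vec m (\<lambda>k. X $$ (i,k) * s k) \<bullet> row Y j"
      using i j Y by simp
    also have "\<dots> = (\<Sum>k<m. X $$ (i,k) * s k * Y $$ (j,k))"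
      unfolding sp_def' by (rule sum.cong) (use Y j in auto)
    finally show ?thesis .
  qed
  ultimately show ?thesis by simp
qed

lemma trace_inner_repr:
  fixes X Y :: "real mat"
  assumes X: "X \<in> carrier_mat n m" and Y: "Y \<in> carrier_mat n m" and Z: "Z \<in> carrier_mat n n"
  shows "trace_inner n Z (X * mat_diag m s * transpose_mat Y) = (\<Sum>k<m. s k * (col X k \<bullet> (Z *\<^sub>v col Y k)))"
proof -
  have "trace_inner n Z (X * mat_diag m s * transpose_mat Y) = (\<Sum>i<n. \<Sum>j<n. Z $$ (i,j) * (\<Sum>k<m. X $$ (i,k) * s k * Y $$ (j,k)))"
    unfolding trace_inner_def using entry_XDY[OF X Y] by simp
  also have "\<dots> = (\<Sum>i<n. \<Sum>j<n. \<Sum>k<m. s k * (X $$ (i,k) * (Z $$ (i,j) * Y $$ (j,k))))"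
    by (simp add: sum_distrib_left algebra_simps)
  also have "\<dots> = (\<Sum>i<n. \<Sum>k<m. \<Sum>j<n. s k * (X $$ (i,k) * (Z $$ (i,j) * Y $$ (j,k))))"
    by (rule sum.cong[OF refl], rule sum.swap)
  also have "\<dots> = (\<Sum>k<m. \<Sum>i<n. \<Sum>j<n. s k * (X $$ (i,k) * (Z $$ (i,j) * Y $$ (j,k))))"
    by (rule sum.swap)
  also have "\<dots> = (\<Sum>k<m. s k * (col X k \<bullet> (Z *\<^sub>v col Y k)))"
  proof (rule sum.cong[OF refl])
    fix k assume k: "k \<in> {..<m}"
    have "col X k \<bullet> (Z *\<^sub>v col Y k) = (\<Sum>i<n. X $$ (i,k) * (\<Sum>j<n. Z $$ (i,j) * Y $$ (j,k)))"
      using X Y Z k by (simp add: sp_def')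
    thus "(\<Sum>i<n. \<Sum>j<n. s k * (X $$ (i,k) * (Z $$ (i,j) * Y $$ (j,k)))) = s k * (col X k \<bullet> (Z *\<^sub>v col Y k))"
      by (simp add: sum_distrib_left)
  qed
  finally show ?thesis .
qed

lemma col_unit: assumes X: "(X::real mat) \<in> carrier_mat n m" and O: "transpose_mat X * X = 1\<^sub>m m" and k: "k < m"
  shows "col X k \<bullet> col X k = 1"
proof -
  have "(transpose_mat X * X) $$ (k,k) = col X k \<bullet> col X k" using X k by simp
  thus ?thesis using O k by simp
qed

lemma nuc_bound:
  assumes X: "X \<in> carrier_mat n m" and Y: "Y \<in> carrier_mat n m"
    and XO: "transpose_mat X * X = 1\<^sub>m m" and YO: "transpose_mat Y * Y = 1\<^sub>m m"
    and s: "\<forall>k<m. s k \<ge> 0" and Z: "contr n c Z" and c: "c \<ge> 0"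
  shows "trace_inner n Z (X * mat_diag m s * transpose_mat Y) \<le> c * (\<Sum>k<m. s k)"
proof -
  have Zc: "Z \<in> carrier_mat n n" using Z unfolding contr_def by simp
  have trm: "col X k \<bullet> (Z *\<^sub>v col Y k) \<le> c" if k: "k < m" for k
  proof -
    have xc: "col X k \<in> carrier_vec n" and yc: "col Y k \<in> carrier_vec n" using X Y k by auto
    have "col X k \<bullet> (Z *\<^sub>v col Y k) \<le> \<bar>col X k \<bullet> (Z *\<^sub>v col Y k)\<bar>" by simp
    also have "\<dots> \<le> sqrt (col X k \<bullet> col X k) * sqrt ((Z *\<^sub>v col Y k) \<bullet> (Z *\<^sub>v col Y k))"
      by (rule cs_abs[of _ n]) (use xc yc Zc in auto)
    also have "\<dots> = sqrt ((Z *\<^sub>v col Y k) \<bullet> (Z *\<^sub>v col Y k))" using col_unit[OF X XO k] by simp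
    also have "\<dots> \<le> sqrt (c\<^sup>2 * (col Y k \<bullet> col Y k))"
      using Z yc unfolding contr_def by (intro real_sqrt_le_mono) blast
    also have "\<dots> = c" using col_unit[OF Y YO k] c by simp
    finally show ?thesis .
  qed
  have "trace_inner n Z (X * mat_diag m s * transpose_mat Y) = (\<Sum>k<m. s k * (col X k \<bullet> (Z *\<^sub>v col Y k)))"
    by (rule trace_inner_repr[OF X Y Zc])
  also have "\<dots> \<le> (\<Sum>k<m. s k * c)"
    by (rule sum_mono) (use trm s in \<open>auto intro: mult_left_mono\<close>)
  also have "\<dots> = c * (\<Sum>k<m. s k)" by (simp add: sum_distrib_left mult.commute)
  finally show ?thesis .
qed

lemma inner_attain:
  assumes X: "X \<in> carrier_mat n m" and Y: "Y \<in> carrier_mat n m"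
    and XO: "transpose_mat X * X = 1\<^sub>m m" and YO: "transpose_mat Y * Y = 1\<^sub>m m"
  shows "trace_inner n (X * transpose_mat Y) (X * mat_diag m s * transpose_mat Y) = (\<Sum>k<m. s k)"
proof -
  have XY: "X * transpose_mat Y \<in> carrier_mat n n" using X Y by simp
  have "col X k \<bullet> ((X * transpose_mat Y) *\<^sub>v col Y k) = 1" if k: "k < m" for k
  proof -
    have "(X * transpose_mat Y) *\<^sub>v col Y k = X *\<^sub>v (transpose_mat Y *\<^sub>v col Y k)"
      using X Y k by simp
    also have "transpose_mat Y *\<^sub>v col Y k = col (transpose_mat Y * Y) k"
      using col_mult2[of "transpose_mat Y" m n Y m k] X Y k by simp
    also have "\<dots> = col (1\<^sub>m m) k" using YO by simp
    also have "X *\<^sub>v col (1\<^sub>m m) k = col (X * 1\<^sub>m m) k"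
      using col_mult2[of X n m "1\<^sub>m m" m k] X k by simp
    also have "X * 1\<^sub>m m = X" using X by simp
    finally show ?thesis using col_unit[OF X XO k] by simp
  qed
  thus ?thesis unfolding trace_inner_repr[OF X Y XY] by simp
qed

lemma orth_contr: assumes P: "(P::real mat) \<in> carrier_mat n n" and Q: "Q \<in> carrier_mat n n"
  and PO: "transpose_mat P * P = 1\<^sub>m n" and QO: "transpose_mat Q * Q = 1\<^sub>m n"
  shows "contr n 1 (P * transpose_mat Q)"
  unfolding contr_def
proof (intro conjI ballI)
  show "P * transpose_mat Q \<in> carrier_mat n n" using P Q by simp
  fix v :: "real vec" assume v: "v \<in> carrier_vec n"
  have "(P * transpose_mat Q) *\<^sub>v v = P *\<^sub>v (transpose_mat Q *\<^sub>v v)" using P Q v by simp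
  moreover have "(P *\<^sub>v (transpose_mat Q *\<^sub>v v)) \<bullet> (P *\<^sub>v (transpose_mat Q *\<^sub>v v)) = (transpose_mat Q *\<^sub>v v) \<bullet> (transpose_mat Q *\<^sub>v v)"
    by (rule mv_nsq_orth[OF P _ PO]) (use Q v in simp)
  moreover have "(transpose_mat Q *\<^sub>v v) \<bullet> (transpose_mat Q *\<^sub>v v) = v \<bullet> v"
    by (rule mv_nsq_orth[of _ n n]) (use Q v orth_right[OF Q QO] in auto)
  ultimately show "((P * transpose_mat Q) *\<^sub>v v) \<bullet> ((P * transpose_mat Q) *\<^sub>v v) \<le> 1\<^sup>2 * (v \<bullet> v)" by simp
qed

definition svdp :: "nat \<Rightarrow> real mat \<Rightarrow> real mat \<Rightarrow> real mat \<Rightarrow> (nat \<Rightarrow> real) \<Rightarrow> bool" where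
  "svdp n A P Q \<sigma> \<longleftrightarrow> P \<in> carrier_mat n n \<and> Q \<in> carrier_mat n n \<and>
      transpose_mat P * P = 1\<^sub>m n \<and> transpose_mat Q * Q = 1\<^sub>m n \<and>
      (\<forall>i<n. \<sigma> i \<ge> 0) \<and> A = P * mat_diag n \<sigma> * transpose_mat Q"

lemma svdp_le: assumes "svdp n A P Q \<sigma>" "svdp n A P' Q' \<sigma>'"
  shows "(\<Sum>i<n. \<sigma>' i) \<le> (\<Sum>i<n. \<sigma> i)"
proof -
  have c: "contr n 1 (P' * transpose_mat Q')" using orth_contr assms(2) unfolding svdp_def by blast
  have "(\<Sum>i<n. \<sigma>' i) = trace_inner n (P' * transpose_mat Q') A"
    using inner_attain[of P' n n Q' \<sigma>'] assms(2) unfolding svdp_def by auto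
  also have "\<dots> \<le> 1 * (\<Sum>i<n. \<sigma> i)"
    using nuc_bound[of P n n Q \<sigma> 1 "P' * transpose_mat Q'"] c assms(1) unfolding svdp_def by auto
  finally show ?thesis by simp
qed

lemma nuc_eq: assumes "svdp n A P Q \<sigma>" shows "nuclear_norm n A = (\<Sum>i<n. \<sigma> i)"
proof -
  let ?R = "\<lambda>s. \<exists>P Q \<sigma>. P \<in> carrier_mat n n \<and> Q \<in> carrier_mat n n \<and>
      transpose_mat P * P = 1\<^sub>m n \<and> transpose_mat Q * Q = 1\<^sub>m n \<and>
      (\<forall>i<n. \<sigma> i \<ge> 0) \<and> A = P * mat_diag n \<sigma> * transpose_mat Q \<and> s = (\<Sum>i<n. \<sigma> i)"
  have ex: "\<exists>s. ?R s" using assms unfolding svdp_def by blast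
  have "?R (nuclear_norm n A)" unfolding nuclear_norm_def by (rule someI_ex[OF ex])
  then obtain P' Q' \<sigma>' where s': "svdp n A P' Q' \<sigma>'" "nuclear_norm n A = (\<Sum>i<n. \<sigma>' i)"
    unfolding svdp_def by blast
  show ?thesis using svdp_le[OF assms s'(1)] svdp_le[OF s'(1) assms] s'(2) by simp
qed

lemma svdp_exists: assumes "A \<in> carrier_mat n n" shows "\<exists>P Q \<sigma>. svdp n A P Q \<sigma>"
  using svd_exists[OF assms] unfolding svdp_def by blast

lemma nuc_ge: assumes A: "A \<in> carrier_mat n n" and Z: "contr n c Z" and c: "c \<ge> 0"
  shows "trace_inner n Z A \<le> c * nuclear_norm n A"
proof -
  obtain P Q \<sigma> where s: "svdp n A P Q \<sigma>" using svdp_exists[OF A] by blast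
  have "trace_inner n Z A \<le> c * (\<Sum>i<n. \<sigma> i)"
    using nuc_bound[of P n n Q \<sigma> c Z] s Z c unfolding svdp_def by auto
  thus ?thesis using nuc_eq[OF s] by simp
qed

lemma nuc_nonneg: assumes A: "A \<in> carrier_mat n n" shows "nuclear_norm n A \<ge> 0"
proof -
  obtain P Q \<sigma> where s: "svdp n A P Q \<sigma>" using svdp_exists[OF A] by blast
  have "(\<Sum>i<n. \<sigma> i) \<ge> 0" using s unfolding svdp_def by (auto intro: sum_nonneg)
  thus ?thesis using nuc_eq[OF s] by simp
qed

lemma nuc_zero: assumes A: "A \<in> carrier_mat n n" and z: "nuclear_norm n A = 0" shows "A = 0\<^sub>m n n"
proof -
  obtain P Q \<sigma> where s: "svdp n A P Q \<sigma>" using svdp_exists[OF A] by blast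
  have "(\<Sum>i<n. \<sigma> i) = 0" using nuc_eq[OF s] z by simp
  hence s0: "\<forall>i\<in>{..<n}. \<sigma> i = 0" using s unfolding svdp_def by (subst sum_nonneg_eq_0_iff[symmetric]) auto
  have "mat_diag n \<sigma> = 0\<^sub>m n n" by (rule eq_matI) (use s0 in \<open>auto simp: mat_diag_def\<close>)
  moreover have P: "P \<in> carrier_mat n n" and Q: "Q \<in> carrier_mat n n" and Aeq: "A = P * mat_diag n \<sigma> * transpose_mat Q"
    using s unfolding svdp_def by auto
  moreover have "P * 0\<^sub>m n n = 0\<^sub>m n n" using right_mult_zero_mat[OF P] by simp
  moreover have "0\<^sub>m n n * transpose_mat Q = 0\<^sub>m n n" using left_mult_zero_mat[of "transpose_mat Q" n n] Q by simp
  ultimately show ?thesis by simp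
qed

lemma mult_entry: assumes A: "(A::real mat) \<in> carrier_mat n m" and B: "B \<in> carrier_mat m p" and i: "i < n" and j: "j < p"
  shows "(A * B) $$ (i,j) = (\<Sum>k<m. A $$ (i,k) * B $$ (k,j))"
  using A B i j by (auto simp: sp_def' intro!: sum.cong)

lemma ti_comm: "trace_inner n X Y = trace_inner n Y X"
  unfolding trace_inner_def by (simp add: mult.commute)

lemma ti_mult_left: assumes A: "(A::real mat) \<in> carrier_mat n n" and Z: "Z \<in> carrier_mat n n" and Y: "Y \<in> carrier_mat n n"
  shows "trace_inner n (A * Z) Y = trace_inner n Z (transpose_mat A * Y)"
proof -
  have "trace_inner n (A * Z) Y = (\<Sum>i<n. \<Sum>j<n. (\<Sum>k<n. A $$ (i,k) * Z $$ (k,j)) * Y $$ (i,j))"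
    unfolding trace_inner_def by (intro sum.cong refl) (simp add: mult_entry[OF A Z])
  also have "\<dots> = (\<Sum>i<n. \<Sum>j<n. \<Sum>k<n. Z $$ (k,j) * (A $$ (i,k) * Y $$ (i,j)))"
    by (simp add: sum_distrib_left sum_distrib_right algebra_simps)
  also have "\<dots> = (\<Sum>i<n. \<Sum>k<n. \<Sum>j<n. Z $$ (k,j) * (A $$ (i,k) * Y $$ (i,j)))"
    by (intro sum.cong refl sum.swap)
  also have "\<dots> = (\<Sum>k<n. \<Sum>i<n. \<Sum>j<n. Z $$ (k,j) * (A $$ (i,k) * Y $$ (i,j)))"
    by (rule sum.swap)
  also have "\<dots> = (\<Sum>k<n. \<Sum>j<n. \<Sum>i<n. Z $$ (k,j) * (A $$ (i,k) * Y $$ (i,j)))"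
    by (intro sum.cong refl sum.swap)
  also have "\<dots> = trace_inner n Z (transpose_mat A * Y)"
    unfolding trace_inner_def
  proof (intro sum.cong refl)
    fix k j assume k: "k \<in> {..<n}" and j: "j \<in> {..<n}"
    have "(transpose_mat A * Y) $$ (k,j) = (\<Sum>i<n. A $$ (i,k) * Y $$ (i,j))"
      using mult_entry[of "transpose_mat A" n n Y n k j] A Y k j by simp
    thus "(\<Sum>i<n. Z $$ (k,j) * (A $$ (i,k) * Y $$ (i,j))) = Z $$ (k,j) * (transpose_mat A * Y) $$ (k,j)"
      by (simp add: sum_distrib_left)
  qed
  finally show ?thesis .
qed

lemma ti_transpose: assumes X: "X \<in> carrier_mat n n" and Y: "Y \<in> carrier_mat n n"
  shows "trace_inner n (transpose_mat X) (transpose_mat Y) = trace_inner n X Y"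
proof -
  have "trace_inner n (transpose_mat X) (transpose_mat Y) = (\<Sum>i<n. \<Sum>j<n. X $$ (j,i) * Y $$ (j,i))"
    unfolding trace_inner_def using X Y by (intro sum.cong refl) simp
  also have "\<dots> = trace_inner n X Y" unfolding trace_inner_def by (rule sum.swap)
  finally show ?thesis .
qed

lemma ti_mult_right: assumes B: "(B::real mat) \<in> carrier_mat n n" and Z: "Z \<in> carrier_mat n n" and Y: "Y \<in> carrier_mat n n"
  shows "trace_inner n (Z * B) Y = trace_inner n Z (Y * transpose_mat B)"
proof -
  have "trace_inner n (Z * B) Y = trace_inner n (transpose_mat (Z * B)) (transpose_mat Y)"
    using ti_transpose[of "Z * B" n Y] B Z Y by simp
  also have "transpose_mat (Z * B) = transpose_mat B * transpose_mat Z" using transpose_mult[OF Z B] .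
  also have "trace_inner n (transpose_mat B * transpose_mat Z) (transpose_mat Y) = trace_inner n (transpose_mat Z) (B * transpose_mat Y)"
    using ti_mult_left[of "transpose_mat B" n "transpose_mat Z" "transpose_mat Y"] B Z Y by simp
  also have "\<dots> = trace_inner n (transpose_mat Z) (transpose_mat (Y * transpose_mat B))"
    using transpose_mult[of Y n n "transpose_mat B" n] Y B by simp
  also have "\<dots> = trace_inner n Z (Y * transpose_mat B)"
    using ti_transpose[of Z n "Y * transpose_mat B"] Z Y B by simp
  finally show ?thesis .
qed

lemma ti_add_right: assumes "Y \<in> carrier_mat n n" "Z \<in> carrier_mat n n"
  shows "trace_inner n X (Y + Z) = trace_inner n X Y + trace_inner n X Z"
  unfolding trace_inner_def using assms by (simp add: sum.distrib algebra_simps)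

lemma ti_minus_right: assumes "Y \<in> carrier_mat n n" "Z \<in> carrier_mat n n"
  shows "trace_inner n X (Y - Z) = trace_inner n X Y - trace_inner n X Z"
  unfolding trace_inner_def using assms by (simp add: sum_subtractf algebra_simps)

lemma ti_smult_right: assumes "Y \<in> carrier_mat n n"
  shows "trace_inner n X (c \<cdot>\<^sub>m Y) = c * trace_inner n X Y"
  unfolding trace_inner_def using assms by (simp add: sum_distrib_left algebra_simps)

lemma ti_add_left: assumes "Y \<in> carrier_mat n n" "Z \<in> carrier_mat n n"
  shows "trace_inner n (Y + Z) X = trace_inner n Y X + trace_inner n Z X"
  using ti_add_right[OF assms, of X] ti_comm by metis

lemma ti_minus_left: assumes "Y \<in> carrier_mat n n" "Z \<in> carrier_mat n n"
  shows "trace_inner n (Y - Z) X = trace_inner n Y X - trace_inner n Z X"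
  using ti_minus_right[OF assms, of X] ti_comm by metis

lemma ti_smult_left: assumes "Y \<in> carrier_mat n n"
  shows "trace_inner n (c \<cdot>\<^sub>m Y) X = c * trace_inner n Y X"
  using ti_smult_right[OF assms, of X] ti_comm by metis

lemma ti_zero_right[simp]: "trace_inner n X (0\<^sub>m n n) = 0"
  unfolding trace_inner_def by simp

lemma ti_self_nonneg: "trace_inner n X X \<ge> 0"
  unfolding trace_inner_def by (intro sum_nonneg) simp

lemma ti_self_zero: assumes X: "X \<in> carrier_mat n n" and z: "trace_inner n X X = 0" shows "X = 0\<^sub>m n n"
proof -
  have "\<forall>i\<in>{..<n}. (\<Sum>j<n. X $$ (i,j) * X $$ (i,j)) = 0"
    using z unfolding trace_inner_def by (subst sum_nonneg_eq_0_iff[symmetric]) (auto intro: sum_nonneg)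
  hence "\<forall>i<n. \<forall>j\<in>{..<n}. X $$ (i,j) * X $$ (i,j) = 0"
    by (subst (asm) sum_nonneg_eq_0_iff) auto
  thus ?thesis using X by (intro eq_matI) auto
qed

definition Em :: "nat \<Rightarrow> real mat \<Rightarrow> real mat" where "Em n U = 1\<^sub>m n - U * transpose_mat U"
definition perp :: "nat \<Rightarrow> real mat \<Rightarrow> real mat \<Rightarrow> real mat \<Rightarrow> real mat" where
  "perp n U V X = Em n U * X * Em n V"
definition pt :: "nat \<Rightarrow> real mat \<Rightarrow> real mat \<Rightarrow> real mat \<Rightarrow> real mat" where
  "pt n U V X = X - perp n U V X"

lemma UUt_carrier[simp]: "U \<in> carrier_mat n r \<Longrightarrow> U * transpose_mat U \<in> carrier_mat n n"
  by (rule mult_carrier_mat[of _ n r]) simp_all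

lemma Em_carrier[simp]: "U \<in> carrier_mat n r \<Longrightarrow> Em n U \<in> carrier_mat n n"
  unfolding Em_def by (rule minus_carrier_mat) simp

lemma perp_carrier[simp]: "U \<in> carrier_mat n r \<Longrightarrow> V \<in> carrier_mat n r' \<Longrightarrow> X \<in> carrier_mat n n \<Longrightarrow> perp n U V X \<in> carrier_mat n n"
  unfolding perp_def by (meson Em_carrier mult_carrier_mat)

lemma pt_carrier[simp]: "U \<in> carrier_mat n r \<Longrightarrow> V \<in> carrier_mat n r' \<Longrightarrow> X \<in> carrier_mat n n \<Longrightarrow> pt n U V X \<in> carrier_mat n n"
  unfolding pt_def by (rule minus_carrier_mat) (rule perp_carrier)

lemma Em_U: assumes U: "U \<in> carrier_mat n r" and O: "transpose_mat U * U = 1\<^sub>m r"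
  shows "Em n U * U = 0\<^sub>m n r"
proof -
  have "Em n U * U = 1\<^sub>m n * U - (U * transpose_mat U) * U"
    unfolding Em_def by (rule minus_mult_distrib_mat[of "1\<^sub>m n" n n "U * transpose_mat U" U r]) (use U in auto)
  also have "(U * transpose_mat U) * U = U * (transpose_mat U * U)" using U by (simp add: assoc_mult_mat)
  also have "\<dots> = U" using O U by simp
  finally show ?thesis using U by simp
qed

lemma Em_T: assumes U: "U \<in> carrier_mat n r" shows "transpose_mat (Em n U) = Em n U"
proof -
  have "transpose_mat (1\<^sub>m n - U * transpose_mat U) = transpose_mat (1\<^sub>m n) - transpose_mat (U * transpose_mat U)"
    by (rule transpose_minus[of "1\<^sub>m n" n n "U * transpose_mat U"]) (use U in simp_all)
  also have "transpose_mat (U * transpose_mat U) = U * transpose_mat U"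
    using transpose_mult[of U n r "transpose_mat U" n] U by simp
  finally show ?thesis unfolding Em_def by simp
qed

lemma Ut_Em: assumes U: "U \<in> carrier_mat n r" and O: "transpose_mat U * U = 1\<^sub>m r"
  shows "transpose_mat U * Em n U = 0\<^sub>m r n"
proof -
  have "transpose_mat U * Em n U = transpose_mat (transpose_mat (Em n U) * U)"
    using U transpose_mult[of "transpose_mat (Em n U)" n n U r] by simp
  also have "\<dots> = 0\<^sub>m r n" using Em_T[OF U] Em_U[OF U O] by simp
  finally show ?thesis .
qed

lemma perp_adj: assumes U: "U \<in> carrier_mat n r" and V: "V \<in> carrier_mat n r'"
  and X: "X \<in> carrier_mat n n" and Y: "Y \<in> carrier_mat n n"
  shows "trace_inner n (perp n U V X) Y = trace_inner n X (perp n U V Y)"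
proof -
  have E: "Em n U \<in> carrier_mat n n" and G: "Em n V \<in> carrier_mat n n" using U V by auto
  have "trace_inner n (perp n U V X) Y = trace_inner n (Em n U * X) (Y * transpose_mat (Em n V))"
    unfolding perp_def by (rule ti_mult_right) (use E G X Y in auto)
  also have "\<dots> = trace_inner n X (transpose_mat (Em n U) * (Y * transpose_mat (Em n V)))"
    by (rule ti_mult_left) (use E G X Y in auto)
  also have "transpose_mat (Em n U) * (Y * transpose_mat (Em n V)) = perp n U V Y"
    unfolding perp_def Em_T[OF U] Em_T[OF V] using E G Y by (simp add: assoc_mult_mat)
  finally show ?thesis .
qed

lemma perp_T: assumes U: "U \<in> carrier_mat n r" and V: "V \<in> carrier_mat n r"
  and UO: "transpose_mat U * U = 1\<^sub>m r" and VO: "transpose_mat V * V = 1\<^sub>m r"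
  and Z: "Z \<in> tangent_space n r U V"
  shows "perp n U V Z = 0\<^sub>m n n"
proof -
  obtain A B where A: "A \<in> carrier_mat n r" and B: "B \<in> carrier_mat n r" and Zd: "Z = U * transpose_mat A + B * transpose_mat V"
    using Z unfolding tangent_space_def by blast
  have E: "Em n U \<in> carrier_mat n n" and G: "Em n V \<in> carrier_mat n n" using U V by auto
  have "Em n U * Z = Em n U * (U * transpose_mat A) + Em n U * (B * transpose_mat V)"
    unfolding Zd by (rule mult_add_distrib_mat[of "Em n U" n n "U * transpose_mat A" n "B * transpose_mat V"]) (use E U A B V in auto)
  also have "Em n U * (U * transpose_mat A) = (Em n U * U) * transpose_mat A"
    by (rule sym, rule assoc_mult_mat[of _ n n _ r _ n]) (use E U A in auto)
  also have "\<dots> = 0\<^sub>m n n" using Em_U[OF U UO] A by simp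
  also have "Em n U * (B * transpose_mat V) = (Em n U * B) * transpose_mat V"
    by (rule sym, rule assoc_mult_mat[of _ n n _ r _ n]) (use E B V in auto)
  finally have EZ: "Em n U * Z = Em n U * B * transpose_mat V" using E B V
    by (metis left_add_zero_mat mult_carrier_mat transpose_carrier_mat)
  have "perp n U V Z = Em n U * B * (transpose_mat V * Em n V)"
    unfolding perp_def EZ by (rule assoc_mult_mat[of _ n r _ n _ n]) (use E B V G in auto)
  also have "\<dots> = 0\<^sub>m n n" using Ut_Em[OF V VO] E B by simp
  finally show ?thesis .
qed

lemma L0_T: assumes U: "U \<in> carrier_mat n r" and V: "V \<in> carrier_mat n r" and S: "S \<in> carrier_mat r r"
  shows "U * S * transpose_mat V \<in> tangent_space n r U V"
proof -
  have "U * S * transpose_mat V = U * transpose_mat (V * transpose_mat S) + 0\<^sub>m n r * transpose_mat V"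
  proof -
    have "transpose_mat (V * transpose_mat S) = S * transpose_mat V"
      using transpose_mult[of V n r "transpose_mat S" r] V S by simp
    thus ?thesis using U V S by (simp add: assoc_mult_mat)
  qed
  moreover have "V * transpose_mat S \<in> carrier_mat n r" using V S by simp
  moreover have "(0\<^sub>m n r :: real mat) \<in> carrier_mat n r" by simp
  ultimately show ?thesis unfolding tangent_space_def by blast
qed

lemma pt_in_T: assumes U: "U \<in> carrier_mat n r" and V: "V \<in> carrier_mat n r"
  and X: "X \<in> carrier_mat n n"
  shows "pt n U V X \<in> tangent_space n r U V"
proof -
  have E: "Em n U \<in> carrier_mat n n" and G: "Em n V \<in> carrier_mat n n" using U V by auto
  have UUX: "U * transpose_mat U * X \<in> carrier_mat n n" using U X by simp
  have EX: "Em n U * X = X - U * transpose_mat U * X"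
    unfolding Em_def by (subst minus_mult_distrib_mat) (use U X in auto)
  have EXc: "Em n U * X \<in> carrier_mat n n" using E X by simp
  have VV: "V * transpose_mat V \<in> carrier_mat n n" using V by simp
  have EXG: "Em n U * X * Em n V = Em n U * X - Em n U * X * (V * transpose_mat V)"
    unfolding Em_def[of n V] by (subst mult_minus_distrib_mat[OF EXc one_carrier_mat VV]) (use EXc right_mult_one_mat[OF EXc] in simp)
  have EXGc: "Em n U * X * (V * transpose_mat V) \<in> carrier_mat n n" using EXc VV by simp
  have gen: "M1 \<in> carrier_mat n n \<Longrightarrow> M2 \<in> carrier_mat n n \<Longrightarrow> X - ((X - M1) - M2) = M1 + M2" for M1 M2 :: "real mat"
    by (rule eq_matI) (use X in auto)
  have "pt n U V X = X - ((X - U * transpose_mat U * X) - Em n U * X * (V * transpose_mat V))"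
    unfolding pt_def perp_def EXG by (subst (1) EX) (rule refl)
  also have "\<dots> = U * transpose_mat U * X + Em n U * X * (V * transpose_mat V)"
    by (rule gen[OF UUX EXGc])
  also have "U * transpose_mat U * X = U * transpose_mat (transpose_mat X * U)"
  proof -
    have "transpose_mat (transpose_mat X * U) = transpose_mat U * X"
      using transpose_mult[of "transpose_mat X" n n U r] U X by simp
    thus ?thesis using U X by (simp add: assoc_mult_mat)
  qed
  also have "Em n U * X * (V * transpose_mat V) = (Em n U * X * V) * transpose_mat V"
    using assoc_mult_mat[of "Em n U * X" n n V r "transpose_mat V" n] EXc V by simp
  finally have "pt n U V X = U * transpose_mat (transpose_mat X * U) + (Em n U * X * V) * transpose_mat V" .
  moreover have "transpose_mat X * U \<in> carrier_mat n r" using U X by simp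
  moreover have "Em n U * X * V \<in> carrier_mat n r" using EXc V by simp
  ultimately show ?thesis unfolding tangent_space_def by blast
qed

lemma pt_perp_sum: assumes U: "U \<in> carrier_mat n r" and V: "V \<in> carrier_mat n r'" and X: "X \<in> carrier_mat n n"
  shows "X = pt n U V X + perp n U V X"
proof -
  have "perp n U V X \<in> carrier_mat n n" using U V X by (rule perp_carrier)
  thus ?thesis unfolding pt_def by (intro eq_matI) (use X in auto)
qed

lemma perp_minus: assumes U: "U \<in> carrier_mat n r" and V: "V \<in> carrier_mat n r'"
  and X: "X \<in> carrier_mat n n" and Y: "Y \<in> carrier_mat n n"
  shows "perp n U V (X - Y) = perp n U V X - perp n U V Y"
proof -
  have E: "Em n U \<in> carrier_mat n n" and G: "Em n V \<in> carrier_mat n n" using U V by auto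
  have "Em n U * (X - Y) = Em n U * X - Em n U * Y" by (rule mult_minus_distrib_mat) (use E X Y in auto)
  moreover have "(Em n U * X - Em n U * Y) * Em n V = Em n U * X * Em n V - Em n U * Y * Em n V"
    by (rule minus_mult_distrib_mat) (use E X Y G in auto)
  ultimately show ?thesis unfolding perp_def by simp
qed

lemma perp_smult: assumes U: "U \<in> carrier_mat n r" and V: "V \<in> carrier_mat n r'" and X: "X \<in> carrier_mat n n"
  shows "perp n U V (c \<cdot>\<^sub>m X) = c \<cdot>\<^sub>m perp n U V X"
proof -
  have E: "Em n U \<in> carrier_mat n n" and G: "Em n V \<in> carrier_mat n n" using U V by auto
  have "Em n U * (c \<cdot>\<^sub>m X) = c \<cdot>\<^sub>m (Em n U * X)" by (rule mult_smult_distrib[OF E X])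
  moreover have "(c \<cdot>\<^sub>m (Em n U * X)) * Em n V = c \<cdot>\<^sub>m (Em n U * X * Em n V)"
    by (rule mult_smult_assoc_mat) (use E X G in auto)
  ultimately show ?thesis unfolding perp_def by simp
qed

lemma pt_smult: assumes U: "U \<in> carrier_mat n r" and V: "V \<in> carrier_mat n r'" and X: "X \<in> carrier_mat n n"
  shows "pt n U V (c \<cdot>\<^sub>m X) = c \<cdot>\<^sub>m pt n U V X"
proof -
  have "perp n U V X \<in> carrier_mat n n" using U V X by (rule perp_carrier)
  thus ?thesis unfolding pt_def perp_smult[OF assms] by (intro eq_matI) (use X in \<open>auto simp: algebra_simps\<close>)
qed

lemma ti_perp_pt: assumes U: "U \<in> carrier_mat n r" and V: "V \<in> carrier_mat n r"
  and UO: "transpose_mat U * U = 1\<^sub>m r" and VO: "transpose_mat V * V = 1\<^sub>m r"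
  and X: "X \<in> carrier_mat n n" and Z: "Z \<in> tangent_space n r U V"
  shows "trace_inner n (perp n U V X) Z = 0"
proof -
  have Zc: "Z \<in> carrier_mat n n" using Z U V unfolding tangent_space_def by auto
  show ?thesis using perp_adj[OF U V X Zc] perp_T[OF U V UO VO Z] by simp
qed

lemma P_T_eq: assumes U: "U \<in> carrier_mat n r" and V: "V \<in> carrier_mat n r"
  and UO: "transpose_mat U * U = 1\<^sub>m r" and VO: "transpose_mat V * V = 1\<^sub>m r"
  and X: "X \<in> carrier_mat n n"
  shows "P_T n r U V X = pt n U V X"
  unfolding P_T_def orth_proj_def
proof (rule the_equality)
  have res: "X - pt n U V X = perp n U V X" unfolding pt_def by (rule eq_matI) (use U V X in auto)
  show "pt n U V X \<in> tangent_space n r U V \<and> (\<forall>Z\<in>tangent_space n r U V. trace_inner n (X - pt n U V X) Z = 0)"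
    using pt_in_T[OF U V X] ti_perp_pt[OF U V UO VO X] unfolding res by blast
next
  fix Y assume Y: "Y \<in> tangent_space n r U V \<and> (\<forall>Z\<in>tangent_space n r U V. trace_inner n (X - Y) Z = 0)"
  have Yc: "Y \<in> carrier_mat n n" using Y U V unfolding tangent_space_def by auto
  define R where "R = X - Y"
  have Rc: "R \<in> carrier_mat n n" unfolding R_def using Yc by (rule minus_carrier_mat)
  have "trace_inner n R (pt n U V R) = 0" using Y pt_in_T[OF U V Rc] unfolding R_def by blast
  moreover have "trace_inner n R (pt n U V R) = trace_inner n (pt n U V R) (pt n U V R) + trace_inner n (perp n U V R) (pt n U V R)"
    using ti_add_left[of "pt n U V R" n "perp n U V R" "pt n U V R"] pt_perp_sum[OF U V Rc] U V Rc by simp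
  moreover have "trace_inner n (perp n U V R) (pt n U V R) = 0" by (rule ti_perp_pt[OF U V UO VO Rc pt_in_T[OF U V Rc]])
  ultimately have "trace_inner n (pt n U V R) (pt n U V R) = 0" by simp
  hence ptR: "pt n U V R = 0\<^sub>m n n" using ti_self_zero[of "pt n U V R" n] U V Rc by simp
  have "perp n U V Y = 0\<^sub>m n n" using perp_T[OF U V UO VO] Y by blast
  moreover have "perp n U V X \<in> carrier_mat n n" using U V X by (rule perp_carrier)
  ultimately have "perp n U V R = perp n U V X" unfolding R_def perp_minus[OF U V X Yc] by (intro eq_matI) auto
  hence "R = perp n U V X" using pt_perp_sum[OF U V Rc] ptR U V Rc left_add_zero_mat[OF perp_carrier[OF U V X]] by simp
  moreover have "Y = X - (X - Y)" by (rule eq_matI) (use Yc X in auto)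
  ultimately show "Y = pt n U V X" unfolding R_def pt_def by simp
qed

lemma Em_idem: assumes U: "U \<in> carrier_mat n r" and O: "transpose_mat U * U = 1\<^sub>m r"
  shows "Em n U * Em n U = Em n U"
proof -
  have E: "Em n U \<in> carrier_mat n n" using U by simp
  have a: "Em n U * Em n U = 1\<^sub>m n * Em n U - (U * transpose_mat U) * Em n U"
    by (subst (1) Em_def) (rule minus_mult_distrib_mat[of _ n n _ _ n], use U E in auto)
  have b: "(U * transpose_mat U) * Em n U = 0\<^sub>m n n"
  proof -
    have "(U * transpose_mat U) * Em n U = U * (transpose_mat U * Em n U)"
      by (rule assoc_mult_mat[of _ n r _ n _ n]) (use U E in auto)
    thus ?thesis using Ut_Em[OF U O] U by simp
  qed
  have c: "1\<^sub>m n * Em n U - 0\<^sub>m n n = Em n U" by (rule eq_matI) (use E in auto)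
  show ?thesis by (simp only: a b c)
qed

lemma Em_nsq: assumes U: "U \<in> carrier_mat n r" and O: "transpose_mat U * U = 1\<^sub>m r" and y: "y \<in> carrier_vec n"
  shows "(Em n U *\<^sub>v y) \<bullet> (Em n U *\<^sub>v y) = y \<bullet> y - (transpose_mat U *\<^sub>v y) \<bullet> (transpose_mat U *\<^sub>v y)"
proof -
  have E: "Em n U \<in> carrier_mat n n" using U by simp
  have e1: "(Em n U *\<^sub>v y) \<bullet> (Em n U *\<^sub>v y) = y \<bullet> ((transpose_mat (Em n U) * Em n U) *\<^sub>v y)"
    by (rule mv_nsq[OF E y])
  have e2: "transpose_mat (Em n U) * Em n U = Em n U" using Em_T[OF U] Em_idem[OF U O] by simp
  have e3: "Em n U *\<^sub>v y = y - (U * transpose_mat U) *\<^sub>v y"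
    unfolding Em_def by (subst minus_mult_distrib_mat_vec[of _ n n]) (use U y in auto)
  have e4: "y \<bullet> (y - (U * transpose_mat U) *\<^sub>v y) = y \<bullet> y - y \<bullet> ((U * transpose_mat U) *\<^sub>v y)"
    by (rule scalar_prod_minus_distrib) (use U y in auto)
  have e5: "(U * transpose_mat U) *\<^sub>v y = U *\<^sub>v (transpose_mat U *\<^sub>v y)" using U y by simp
  have e6: "y \<bullet> (U *\<^sub>v (transpose_mat U *\<^sub>v y)) = (transpose_mat U *\<^sub>v y) \<bullet> (transpose_mat U *\<^sub>v y)"
    by (rule sp_mv[OF U]) (use U y in auto)
  have "(Em n U *\<^sub>v y) \<bullet> (Em n U *\<^sub>v y) = y \<bullet> (Em n U *\<^sub>v y)" using e1 e2 by simp
  also have "\<dots> = y \<bullet> (y - (U * transpose_mat U) *\<^sub>v y)" by (simp only: e3)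
  finally show ?thesis using e4 e5 e6 by simp
qed

lemma zero_mv: assumes "(y::real vec) \<in> carrier_vec n" shows "0\<^sub>m m n *\<^sub>v y = 0\<^sub>v m"
  by (rule eq_vecI) (use assms in \<open>auto simp: sp_def'\<close>)

lemma contr_D: assumes U: "U \<in> carrier_mat n r" and V: "V \<in> carrier_mat n r"
  and UO: "transpose_mat U * U = 1\<^sub>m r" and VO: "transpose_mat V * V = 1\<^sub>m r"
  and Z: "contr n 1 Z"
  shows "contr n 1 (U * transpose_mat V + Em n U * Z * Em n V)"
  unfolding contr_def
proof (intro conjI ballI)
  have Zc: "Z \<in> carrier_mat n n" using Z unfolding contr_def by simp
  have E: "Em n U \<in> carrier_mat n n" and G: "Em n V \<in> carrier_mat n n" using U V by auto
  have EZG: "Em n U * Z * Em n V \<in> carrier_mat n n" using E G Zc by simp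
  have UV: "U * transpose_mat V \<in> carrier_mat n n" using U V by simp
  show "U * transpose_mat V + Em n U * Z * Em n V \<in> carrier_mat n n" using EZG by simp
  fix v :: "real vec" assume v: "v \<in> carrier_vec n"
  define a where "a = transpose_mat V *\<^sub>v v"
  define y where "y = Z *\<^sub>v (Em n V *\<^sub>v v)"
  have ac: "a \<in> carrier_vec r" unfolding a_def using V v by simp
  have yc: "y \<in> carrier_vec n" unfolding y_def using Zc G v by simp
  have "(U * transpose_mat V + Em n U * Z * Em n V) *\<^sub>v v = (U * transpose_mat V) *\<^sub>v v + (Em n U * Z * Em n V) *\<^sub>v v"
    by (rule add_mult_distrib_mat_vec[OF UV EZG v])
  also have "(U * transpose_mat V) *\<^sub>v v = U *\<^sub>v a" unfolding a_def using U V v by simp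
  also have "(Em n U * Z * Em n V) *\<^sub>v v = Em n U *\<^sub>v y"
  proof -
    have "(Em n U * Z * Em n V) *\<^sub>v v = (Em n U * Z) *\<^sub>v (Em n V *\<^sub>v v)"
      by (rule assoc_mult_mat_vec[of _ n n _ n]) (use E Zc G v in auto)
    also have "\<dots> = Em n U *\<^sub>v (Z *\<^sub>v (Em n V *\<^sub>v v))"
      by (rule assoc_mult_mat_vec[of _ n n _ n]) (use E Zc G v in auto)
    finally show ?thesis unfolding y_def .
  qed
  finally have eq: "(U * transpose_mat V + Em n U * Z * Em n V) *\<^sub>v v = U *\<^sub>v a + Em n U *\<^sub>v y" .
  have Ua: "U *\<^sub>v a \<in> carrier_vec n" using U ac by simp
  have Ey: "Em n U *\<^sub>v y \<in> carrier_vec n" by (rule mult_mat_vec_carrier[OF E yc])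
  have cross: "(U *\<^sub>v a) \<bullet> (Em n U *\<^sub>v y) = 0"
  proof -
    have "(U *\<^sub>v a) \<bullet> (Em n U *\<^sub>v y) = (Em n U *\<^sub>v y) \<bullet> (U *\<^sub>v a)" by (rule comm_scalar_prod[OF Ua Ey])
    also have "\<dots> = (transpose_mat U *\<^sub>v (Em n U *\<^sub>v y)) \<bullet> a" by (rule sp_mv[OF U ac Ey])
    also have "transpose_mat U *\<^sub>v (Em n U *\<^sub>v y) = (transpose_mat U * Em n U) *\<^sub>v y"
      by (rule assoc_mult_mat_vec[symmetric, of _ r n _ n]) (use U E yc in auto)
    also have "\<dots> = 0\<^sub>v r" using Ut_Em[OF U UO] zero_mv[OF yc] by simp
    finally show ?thesis using ac by simp
  qed
  have "(U *\<^sub>v a + Em n U *\<^sub>v y) \<bullet> (U *\<^sub>v a + Em n U *\<^sub>v y) = (U *\<^sub>v a) \<bullet> (U *\<^sub>v a) + 2 * 1 * ((U *\<^sub>v a) \<bullet> (Em n U *\<^sub>v y)) + 1\<^sup>2 * ((Em n U *\<^sub>v y) \<bullet> (Em n U *\<^sub>v y))"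
    using nsq_add_smult[OF Ua Ey, of 1] Ey by simp
  also have "\<dots> = a \<bullet> a + (Em n U *\<^sub>v y) \<bullet> (Em n U *\<^sub>v y)" using cross mv_nsq_orth[OF U ac UO] by simp
  also have "(Em n U *\<^sub>v y) \<bullet> (Em n U *\<^sub>v y) \<le> y \<bullet> y"
    using Em_nsq[OF U UO yc] nsq_ge0[of "transpose_mat U *\<^sub>v y"] by linarith
  also have "y \<bullet> y \<le> 1\<^sup>2 * ((Em n V *\<^sub>v v) \<bullet> (Em n V *\<^sub>v v))" using Z G v unfolding contr_def y_def by simp
  also have "(Em n V *\<^sub>v v) \<bullet> (Em n V *\<^sub>v v) = v \<bullet> v - a \<bullet> a" unfolding a_def using Em_nsq[OF V VO v] .
  finally show "((U * transpose_mat V + Em n U * Z * Em n V) *\<^sub>v v) \<bullet> ((U * transpose_mat V + Em n U * Z * Em n V) *\<^sub>v v) \<le> 1\<^sup>2 * (v \<bullet> v)"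
    unfolding eq by simp
qed

lemma vec_norm_smult: "vec_norm (c \<cdot>\<^sub>v v) = \<bar>c\<bar> * vec_norm v"
proof -
  have "(c \<cdot>\<^sub>v v) \<bullet> (c \<cdot>\<^sub>v v) = c\<^sup>2 * (v \<bullet> v)"
    by (simp add: power2_eq_square smult_scalar_prod_distrib[of v "dim_vec v" v] scalar_prod_smult_distrib[of v "dim_vec v"])
  thus ?thesis unfolding vec_norm_def by (simp add: real_sqrt_mult)
qed

lemma mv_bound: assumes W: "(W::real mat) \<in> carrier_mat n n" and v: "v \<in> carrier_vec n"
  shows "(W *\<^sub>v v) \<bullet> (W *\<^sub>v v) \<le> (\<Sum>i<n. row W i \<bullet> row W i) * (v \<bullet> v)"
proof -
  have "(W *\<^sub>v v) \<bullet> (W *\<^sub>v v) = (\<Sum>i<n. (row W i \<bullet> v)\<^sup>2)" using W nsq_eq[of "W *\<^sub>v v"] by simp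
  also have "\<dots> \<le> (\<Sum>i<n. (row W i \<bullet> row W i) * (v \<bullet> v))"
    by (rule sum_mono, rule cs_sq[of _ n]) (use W v in auto)
  also have "\<dots> = (\<Sum>i<n. row W i \<bullet> row W i) * (v \<bullet> v)" by (simp add: sum_distrib_right)
  finally show ?thesis .
qed

lemma spec_props: assumes W: "(W::real mat) \<in> carrier_mat n n"
  shows "spec_norm n W \<ge> 0" and "\<And>v. v \<in> carrier_vec n \<Longrightarrow> vec_norm (W *\<^sub>v v) \<le> spec_norm n W * vec_norm v"
proof -
  define S where "S = {vec_norm (W *\<^sub>v v) | v. v \<in> carrier_vec n \<and> vec_norm v \<le> 1}"
  define K where "K = (\<Sum>i<n. row W i \<bullet> row W i)"
  have K0: "K \<ge> 0" unfolding K_def by (intro sum_nonneg) simp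
  have bdd: "bdd_above S"
  proof (rule bdd_aboveI)
    fix x assume "x \<in> S"
    then obtain v where v: "v \<in> carrier_vec n" "vec_norm v \<le> 1" and x: "x = vec_norm (W *\<^sub>v v)" unfolding S_def by blast
    have "v \<bullet> v \<le> 1" using v(2) unfolding vec_norm_def by (simp add: real_sqrt_le_1_iff)
    hence "(W *\<^sub>v v) \<bullet> (W *\<^sub>v v) \<le> K" using mv_bound[OF W v(1)] K0 unfolding K_def[symmetric]
      by (meson mult_left_le order_trans nsq_ge0)
    thus "x \<le> sqrt K" unfolding x vec_norm_def by simp
  qed
  have spec: "spec_norm n W = Sup S" unfolding spec_norm_def S_def ..
  have z: "0 \<in> S" unfolding S_def vec_norm_def by (intro CollectI exI[of _ "0\<^sub>v n"]) (use W mv_zero[OF W] in simp)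
  show "spec_norm n W \<ge> 0" unfolding spec by (rule cSup_upper[OF z bdd])
  fix v :: "real vec" assume v: "v \<in> carrier_vec n"
  show "vec_norm (W *\<^sub>v v) \<le> spec_norm n W * vec_norm v"
  proof (cases "v = 0\<^sub>v n")
    case True
    thus ?thesis using mv_zero[OF W] unfolding vec_norm_def by simp
  next
    case False
    hence pos: "vec_norm v > 0" using nsq_pos[OF v] unfolding vec_norm_def by simp
    define c where "c = 1 / vec_norm v"
    have c0: "c > 0" unfolding c_def using pos by simp
    have "vec_norm (c \<cdot>\<^sub>v v) = 1" unfolding vec_norm_smult c_def using pos by simp
    hence "vec_norm (W *\<^sub>v (c \<cdot>\<^sub>v v)) \<in> S" unfolding S_def using v by auto
    hence "vec_norm (W *\<^sub>v (c \<cdot>\<^sub>v v)) \<le> spec_norm n W" unfolding spec by (rule cSup_upper[OF _ bdd])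
    moreover have "W *\<^sub>v (c \<cdot>\<^sub>v v) = c \<cdot>\<^sub>v (W *\<^sub>v v)" using W v by (simp add: mult_mat_vec)
    ultimately have "c * vec_norm (W *\<^sub>v v) \<le> spec_norm n W" using c0 by (simp add: vec_norm_smult)
    hence "vec_norm (W *\<^sub>v v) \<le> spec_norm n W * vec_norm v" using pos unfolding c_def by (simp add: field_simps)
    thus ?thesis .
  qed
qed

lemma spec_contr: assumes W: "(W::real mat) \<in> carrier_mat n n" shows "contr n (spec_norm n W) W"
  unfolding contr_def
proof (intro conjI ballI W)
  fix v :: "real vec" assume v: "v \<in> carrier_vec n"
  have a: "vec_norm (W *\<^sub>v v) \<le> spec_norm n W * vec_norm v" by (rule spec_props(2)[OF W v])
  have "(vec_norm (W *\<^sub>v v))\<^sup>2 \<le> (spec_norm n W * vec_norm v)\<^sup>2"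
    by (rule power_mono[OF a]) (simp add: vec_norm_def)
  thus "(W *\<^sub>v v) \<bullet> (W *\<^sub>v v) \<le> (spec_norm n W)\<^sup>2 * (v \<bullet> v)"
    unfolding vec_norm_def by (simp add: power_mult_distrib)
qed

lemma max_norm_ge: assumes "i < n" "j < n" shows "\<bar>F $$ (i,j)\<bar> \<le> max_norm n F"
proof -
  have fin: "finite {\<bar>F $$ (i,j)\<bar> | i j. i < n \<and> j < n}"
  proof -
    have "{\<bar>F $$ (i,j)\<bar> | i j. i < n \<and> j < n} = (\<lambda>(i,j). \<bar>F $$ (i,j)\<bar>) ` ({..<n} \<times> {..<n})" by auto
    thus ?thesis by simp
  qed
  show ?thesis unfolding max_norm_def by (rule Max_ge) (use fin assms in auto)
qed

lemma frob_POmega: "trace_inner n (P_Omega n \<Omega> Y) (P_Omega n \<Omega> Y) \<le> trace_inner n Y Y"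
  unfolding trace_inner_def P_Omega_def by (intro sum_mono) auto

lemma frob_pt: assumes U: "U \<in> carrier_mat n r" and V: "V \<in> carrier_mat n r"
  and UO: "transpose_mat U * U = 1\<^sub>m r" and VO: "transpose_mat V * V = 1\<^sub>m r"
  and X: "X \<in> carrier_mat n n"
  shows "trace_inner n (pt n U V X) (pt n U V X) \<le> trace_inner n X X"
proof -
  have P: "pt n U V X \<in> carrier_mat n n" and Q: "perp n U V X \<in> carrier_mat n n" using U V X by auto
  have o: "trace_inner n (perp n U V X) (pt n U V X) = 0" by (rule ti_perp_pt[OF U V UO VO X pt_in_T[OF U V X]])
  have "trace_inner n X X = trace_inner n (pt n U V X + perp n U V X) (pt n U V X + perp n U V X)"
    using pt_perp_sum[OF U V X] by simp
  also have "\<dots> = trace_inner n (pt n U V X) (pt n U V X) + trace_inner n (pt n U V X) (perp n U V X)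
      + (trace_inner n (perp n U V X) (pt n U V X) + trace_inner n (perp n U V X) (perp n U V X))"
    by (simp add: ti_add_left[OF P Q] ti_add_right[OF P Q])
  also have "trace_inner n (pt n U V X) (perp n U V X) = 0" using o ti_comm by metis
  finally show ?thesis using o ti_self_nonneg[of n "perp n U V X"] by simp
qed

lemma op_contra:
  assumes U: "U \<in> carrier_mat n r" and V: "V \<in> carrier_mat n r"
  and UO: "transpose_mat U * U = 1\<^sub>m r" and VO: "transpose_mat V * V = 1\<^sub>m r"
  and H: "H \<in> carrier_mat n n" and pH: "pt n U V H = H" and oH: "P_Omega n \<Omega> H = H"
  and op: "map_op_norm n (\<lambda>X. P_Omega n \<Omega> (P_T n r U V X)) < 1"
  shows "H = 0\<^sub>m n n"
proof (rule ccontr)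
  assume nz: "H \<noteq> 0\<^sub>m n n"
  define S where "S = {frob_norm n (P_Omega n \<Omega> (P_T n r U V X)) | X. X \<in> carrier_mat n n \<and> frob_norm n X \<le> 1}"
  have bdd: "bdd_above S"
  proof (rule bdd_aboveI)
    fix x assume "x \<in> S"
    then obtain X where X: "X \<in> carrier_mat n n" "frob_norm n X \<le> 1" and x: "x = frob_norm n (P_Omega n \<Omega> (P_T n r U V X))"
      unfolding S_def by blast
    have "trace_inner n (P_Omega n \<Omega> (pt n U V X)) (P_Omega n \<Omega> (pt n U V X)) \<le> trace_inner n X X"
      using frob_POmega[of n \<Omega> "pt n U V X"] frob_pt[OF U V UO VO X(1)] by linarith
    hence "x \<le> frob_norm n X" unfolding x frob_norm_def P_T_eq[OF U V UO VO X(1)] by simp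
    thus "x \<le> 1" using X(2) by simp
  qed
  have pos: "trace_inner n H H > 0" using ti_self_nonneg[of n H] ti_self_zero[OF H] nz by fastforce
  define c where "c = 1 / sqrt (trace_inner n H H)"
  define X where "X = c \<cdot>\<^sub>m H"
  have Xc: "X \<in> carrier_mat n n" unfolding X_def using H by simp
  have tX: "trace_inner n X X = 1"
  proof -
    have "trace_inner n X X = c * (c * trace_inner n H H)"
      unfolding X_def using ti_smult_left[where Y=H and n=n and c=c and X="c \<cdot>\<^sub>m H"] ti_smult_right[where Y=H and n=n and c=c and X=H] H by simp
    also have "\<dots> = 1" unfolding c_def using pos by (simp add: power2_eq_square[symmetric] power_divide)
    finally show ?thesis .
  qed
  have "P_T n r U V X = X"
  proof -
    have "P_T n r U V X = pt n U V X" by (rule P_T_eq[OF U V UO VO Xc])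
    also have "\<dots> = c \<cdot>\<^sub>m pt n U V H" unfolding X_def by (rule pt_smult[OF U V H])
    finally show ?thesis unfolding pH X_def .
  qed
  moreover have "P_Omega n \<Omega> X = X"
  proof -
    have "P_Omega n \<Omega> X = c \<cdot>\<^sub>m P_Omega n \<Omega> H" unfolding X_def P_Omega_def by (rule eq_matI) (use H in auto)
    thus ?thesis unfolding oH X_def .
  qed
  ultimately have "frob_norm n (P_Omega n \<Omega> (P_T n r U V X)) = 1" unfolding frob_norm_def using tX by simp
  moreover have "frob_norm n X \<le> 1" unfolding frob_norm_def using tX by simp
  ultimately have "1 \<in> S" unfolding S_def using Xc by force
  hence "1 \<le> Sup S" by (rule cSup_upper[OF _ bdd])
  moreover have "Sup S = map_op_norm n (\<lambda>X. P_Omega n \<Omega> (P_T n r U V X))" unfolding map_op_norm_def S_def ..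
  ultimately show False using op by simp
qed

lemma pw: fixes s h f m :: real
  assumes "s \<noteq> 0 \<Longrightarrow> f = 0" "\<bar>f\<bar> \<le> m"
  shows "\<bar>s - h\<bar> + f * h \<ge> \<bar>s\<bar> - sgn s * h + (1 - m) * (if s = 0 then \<bar>h\<bar> else 0)"
proof (cases "s = 0")
  case True
  have "f * h \<ge> - (\<bar>f\<bar> * \<bar>h\<bar>)" by (metis abs_ge_minus_self abs_mult minus_le_iff)
  moreover have "\<bar>f\<bar> * \<bar>h\<bar> \<le> m * \<bar>h\<bar>" using assms(2) by (simp add: mult_right_mono)
  ultimately show ?thesis using True by (simp add: algebra_simps)
next
  case False
  hence f: "f = 0" using assms(1) by simp
  have "\<bar>s - h\<bar> \<ge> sgn s * (s - h)"
    by (cases "s > 0") (auto simp: sgn_if)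
  also have "sgn s * (s - h) = \<bar>s\<bar> - sgn s * h" by (simp add: algebra_simps abs_sgn)
  finally show ?thesis using False f by simp
qed

lemma diag_as_mat_diag: assumes S: "S \<in> carrier_mat r r" and d: "diagonal_mat S"
  shows "S = mat_diag r (\<lambda>i. S $$ (i,i))"
  by (rule eq_matI) (use S d in \<open>auto simp: mat_diag_def diagonal_mat_def\<close>)

theorem lemma2p3:
  fixes n r :: nat and L0 S0 U \<Sigma> V W F :: "real mat" and lam :: real
  assumes "L0 \<in> carrier_mat n n" and "S0 \<in> carrier_mat n n"
    and "reduced_svd n r L0 U \<Sigma> V"
    and "lam > 0"
    and "map_op_norm n (\<lambda>X. P_Omega n (support n S0) (P_T n r U V X)) < 1"
    and "W \<in> carrier_mat n n" and "F \<in> carrier_mat n n"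
    and "U * transpose_mat V + W = lam \<cdot>\<^sub>m (sgn_mat n S0 + F)"
    and "P_T n r U V W = 0\<^sub>m n n"
    and "spec_norm n W < 1"
    and "P_Omega n (support n S0) F = 0\<^sub>m n n"
    and "max_norm n F < 1"
  shows "unique_solution n lam (L0 + S0) L0 S0"
proof -
  note L0c = assms(1) and S0c = assms(2) and lam = assms(4) and op = assms(5) and Wc = assms(6) and Fc = assms(7)
    and hyp = assms(8) and PTW = assms(9) and sW = assms(10) and POF = assms(11) and mF = assms(12)
  have U: "U \<in> carrier_mat n r" and V: "V \<in> carrier_mat n r" and Sc: "\<Sigma> \<in> carrier_mat r r"
    and UO: "transpose_mat U * U = 1\<^sub>m r" and VO: "transpose_mat V * V = 1\<^sub>m r"
    and dg: "diagonal_mat \<Sigma>" and spos: "\<forall>i<r. \<Sigma> $$ (i,i) > 0" and L0eq: "L0 = U * \<Sigma> * transpose_mat V"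
    using assms(3) unfolding reduced_svd_def by auto
  define s0 where "s0 i = \<Sigma> $$ (i,i)" for i
  define t where "t = (\<Sum>k<r. s0 k)"
  have L0d: "L0 = U * mat_diag r s0 * transpose_mat V"
    using L0eq diag_as_mat_diag[OF Sc dg] unfolding s0_def by simp
  have s0pos: "\<forall>k<r. s0 k \<ge> 0" using spos unfolding s0_def by (simp add: less_imp_le)
  have nucL0: "nuclear_norm n L0 \<le> t"
  proof -
    obtain P Q \<sigma> where sv: "svdp n L0 P Q \<sigma>" using svdp_exists[OF L0c] by blast
    have PQ: "contr n 1 (P * transpose_mat Q)" using orth_contr sv unfolding svdp_def by blast
    have "nuclear_norm n L0 = trace_inner n (P * transpose_mat Q) L0"
      using nuc_eq[OF sv] inner_attain[of P n n Q \<sigma>] sv unfolding svdp_def by auto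
    also have "\<dots> \<le> 1 * t" unfolding L0d t_def by (rule nuc_bound[OF U V UO VO s0pos PQ]) simp
    finally show ?thesis by simp
  qed
  have UVL0: "trace_inner n (U * transpose_mat V) L0 = t" unfolding L0d t_def by (rule inner_attain[OF U V UO VO])
  have UVc: "U * transpose_mat V \<in> carrier_mat n n" using U V by simp
  have Wperp: "perp n U V W = W"
  proof -
    have "pt n U V W = 0\<^sub>m n n" using PTW P_T_eq[OF U V UO VO Wc] by simp
    hence "W = 0\<^sub>m n n + perp n U V W" using pt_perp_sum[OF U V Wc] by simp
    thus ?thesis using perp_carrier[OF U V Wc] by simp
  qed
  have sW0: "spec_norm n W \<ge> 0" by (rule spec_props(1)[OF Wc])
  have cW: "contr n (spec_norm n W) W" by (rule spec_contr[OF Wc])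
  have perpL0: "perp n U V L0 = 0\<^sub>m n n" using perp_T[OF U V UO VO L0_T[OF U V Sc]] L0eq by simp
  show ?thesis unfolding unique_solution_def
  proof (intro conjI L0c S0c refl allI impI, elim conjE)
    fix L S assume Lc: "L \<in> carrier_mat n n" and Sc': "S \<in> carrier_mat n n" and sum: "L + S = L0 + S0"
      and ne: "(L, S) \<noteq> (L0, S0)"
    define H where "H = L - L0"
    have Hc: "H \<in> carrier_mat n n" unfolding H_def using L0c by (rule minus_carrier_mat)
    have Leq: "L = L0 + H" unfolding H_def by (rule eq_matI) (use Lc L0c in auto)
    have Sent: "S $$ (i,j) = S0 $$ (i,j) - H $$ (i,j)" if "i < n" "j < n" for i j
    proof -
      have "(L + S) $$ (i,j) = (L0 + S0) $$ (i,j)" using sum by simp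
      thus ?thesis unfolding H_def using that Lc Sc' L0c S0c by simp
    qed
    define M where "M = perp n U V H"
    have Mc: "M \<in> carrier_mat n n" unfolding M_def using U V Hc by simp
    obtain P Q \<sigma> where svM: "svdp n M P Q \<sigma>" using svdp_exists[OF Mc] by blast
    have Pc: "P \<in> carrier_mat n n" and Qc: "Q \<in> carrier_mat n n" and PO: "transpose_mat P * P = 1\<^sub>m n"
      and QO: "transpose_mat Q * Q = 1\<^sub>m n" and Md: "M = P * mat_diag n \<sigma> * transpose_mat Q"
      using svM unfolding svdp_def by auto
    define Z' where "Z' = P * transpose_mat Q"
    have Z'c: "Z' \<in> carrier_mat n n" unfolding Z'_def using Pc Qc by simp
    have cZ': "contr n 1 Z'" unfolding Z'_def by (rule orth_contr[OF Pc Qc PO QO])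
    define W0 where "W0 = perp n U V Z'"
    have W0c: "W0 \<in> carrier_mat n n" unfolding W0_def using U V Z'c by simp
    define Z0 where "Z0 = U * transpose_mat V + W0"
    have cZ0: "contr n 1 Z0" unfolding Z0_def W0_def perp_def by (rule contr_D[OF U V UO VO cZ'])
    define nucM where "nucM = nuclear_norm n M"
    have nucMeq: "nucM = (\<Sum>i<n. \<sigma> i)" unfolding nucM_def by (rule nuc_eq[OF svM])
    have nucM0: "nucM \<ge> 0" unfolding nucM_def by (rule nuc_nonneg[OF Mc])
    have step1: "nuclear_norm n L \<ge> trace_inner n Z0 L" using nuc_ge[OF Lc cZ0] by simp
    have W0L0: "trace_inner n W0 L0 = 0" unfolding W0_def using perp_adj[OF U V Z'c L0c] perpL0 by simp
    have W0H: "trace_inner n W0 H = nucM"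
    proof -
      have "trace_inner n W0 H = trace_inner n Z' M" unfolding W0_def M_def by (rule perp_adj[OF U V Z'c Hc])
      also have "\<dots> = (\<Sum>i<n. \<sigma> i)" unfolding Z'_def Md by (rule inner_attain[OF Pc Qc PO QO])
      finally show ?thesis using nucMeq by simp
    qed
    have Z0L: "trace_inner n Z0 L = t + trace_inner n (U * transpose_mat V) H + nucM"
    proof -
      have "trace_inner n Z0 L = trace_inner n (U * transpose_mat V) L + trace_inner n W0 L"
        unfolding Z0_def by (rule ti_add_left[OF UVc W0c])
      also have "trace_inner n (U * transpose_mat V) L = trace_inner n (U * transpose_mat V) L0 + trace_inner n (U * transpose_mat V) H"
        unfolding Leq by (rule ti_add_right[OF L0c Hc])
      also have "trace_inner n W0 L = trace_inner n W0 L0 + trace_inner n W0 H"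
        unfolding Leq by (rule ti_add_right[OF L0c Hc])
      finally show ?thesis using UVL0 W0L0 W0H by simp
    qed
    have sgnc: "sgn_mat n S0 \<in> carrier_mat n n" unfolding sgn_mat_def by simp
    have rel: "trace_inner n (U * transpose_mat V) H + trace_inner n W H = lam * (trace_inner n (sgn_mat n S0) H + trace_inner n F H)"
    proof -
      have "trace_inner n (U * transpose_mat V) H + trace_inner n W H = trace_inner n (U * transpose_mat V + W) H"
        by (rule ti_add_left[OF UVc Wc, symmetric])
      also have "\<dots> = trace_inner n (lam \<cdot>\<^sub>m (sgn_mat n S0 + F)) H" unfolding hyp ..
      also have "\<dots> = lam * trace_inner n (sgn_mat n S0 + F) H"
        by (rule ti_smult_left) (use sgnc Fc in simp)
      also have "trace_inner n (sgn_mat n S0 + F) H = trace_inner n (sgn_mat n S0) H + trace_inner n F H"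
        by (rule ti_add_left[OF sgnc Fc])
      finally show ?thesis .
    qed
    have WH: "trace_inner n W H \<le> spec_norm n W * nucM"
    proof -
      have "trace_inner n W H = trace_inner n (perp n U V W) H" using Wperp by simp
      also have "\<dots> = trace_inner n W M" unfolding M_def by (rule perp_adj[OF U V Wc Hc])
      also have "\<dots> \<le> spec_norm n W * nucM" unfolding nucM_def by (rule nuc_ge[OF Mc cW sW0])
      finally show ?thesis .
    qed
    define mf where "mf = max_norm n F"
    define off where "off = (\<Sum>i<n. \<Sum>j<n. if S0 $$ (i,j) = 0 then \<bar>H $$ (i,j)\<bar> else 0)"
    have off0: "off \<ge> 0" unfolding off_def by (intro sum_nonneg) auto
    have Fz: "F $$ (i,j) = 0" if "i < n" "j < n" "S0 $$ (i,j) \<noteq> 0" for i j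
    proof -
      have "(i,j) \<in> support n S0" unfolding support_def using that by simp
      hence "P_Omega n (support n S0) F $$ (i,j) = F $$ (i,j)" unfolding P_Omega_def using that by simp
      thus ?thesis using POF that by simp
    qed
    have ent: "l1_norm n S + trace_inner n F H \<ge> l1_norm n S0 - trace_inner n (sgn_mat n S0) H + (1 - mf) * off"
    proof -
      have "l1_norm n S + trace_inner n F H = (\<Sum>i<n. \<Sum>j<n. \<bar>S0 $$ (i,j) - H $$ (i,j)\<bar> + F $$ (i,j) * H $$ (i,j))"
        unfolding l1_norm_def trace_inner_def by (simp add: Sent sum.distrib)
      also have "\<dots> \<ge> (\<Sum>i<n. \<Sum>j<n. \<bar>S0 $$ (i,j)\<bar> - sgn (S0 $$ (i,j)) * H $$ (i,j) + (1 - mf) * (if S0 $$ (i,j) = 0 then \<bar>H $$ (i,j)\<bar> else 0))"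
        by (intro sum_mono pw) (auto simp: Fz mf_def max_norm_ge)
      also have "(\<Sum>i<n. \<Sum>j<n. \<bar>S0 $$ (i,j)\<bar> - sgn (S0 $$ (i,j)) * H $$ (i,j) + (1 - mf) * (if S0 $$ (i,j) = 0 then \<bar>H $$ (i,j)\<bar> else 0))
          = l1_norm n S0 - trace_inner n (sgn_mat n S0) H + (1 - mf) * off"
        unfolding l1_norm_def trace_inner_def off_def sgn_mat_def
        by (simp add: sum.distrib sum_subtractf sum_distrib_left)
      finally show ?thesis .
    qed
    have main: "nuclear_norm n L + lam * l1_norm n S \<ge> nuclear_norm n L0 + lam * l1_norm n S0 + (1 - spec_norm n W) * nucM + lam * (1 - mf) * off"
    proof -
      have "nuclear_norm n L + lam * l1_norm n S \<ge> t + trace_inner n (U * transpose_mat V) H + nucM + lam * l1_norm n S"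
        using step1 Z0L by simp
      moreover have "lam * (l1_norm n S + trace_inner n F H) \<ge> lam * (l1_norm n S0 - trace_inner n (sgn_mat n S0) H + (1 - mf) * off)"
        using ent lam by (simp add: mult_left_mono)
      ultimately show ?thesis using rel WH nucL0 by (simp add: algebra_simps)
    qed
    show "nuclear_norm n L0 + lam * l1_norm n S0 < nuclear_norm n L + lam * l1_norm n S"
    proof (rule ccontr)
      assume "\<not> ?thesis"
      hence le: "(1 - spec_norm n W) * nucM + lam * (1 - mf) * off \<le> 0" using main by simp
      have a: "(1 - spec_norm n W) * nucM \<ge> 0" using sW nucM0 by simp
      have b: "lam * (1 - mf) * off \<ge> 0" using lam mF off0 unfolding mf_def by simp
      have "(1 - spec_norm n W) * nucM = 0" using le a b by linarith
      hence "nucM = 0" using sW by simp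
      hence M0: "M = 0\<^sub>m n n" using nuc_zero[OF Mc] unfolding nucM_def by simp
      have "lam * (1 - mf) * off = 0" using le a b by linarith
      hence "off = 0" using lam mF unfolding mf_def by simp
      hence offz: "\<forall>i\<in>{..<n}. (\<Sum>j<n. if S0 $$ (i,j) = 0 then \<bar>H $$ (i,j)\<bar> else 0) = 0"
        unfolding off_def by (subst sum_nonneg_eq_0_iff[symmetric]) (auto intro: sum_nonneg)
      have Hz: "H $$ (i,j) = 0" if "i < n" "j < n" "S0 $$ (i,j) = 0" for i j
      proof -
        have "(\<Sum>j<n. if S0 $$ (i,j) = 0 then \<bar>H $$ (i,j)\<bar> else 0) = 0" using offz that by simp
        hence "\<forall>j\<in>{..<n}. (if S0 $$ (i,j) = 0 then \<bar>H $$ (i,j)\<bar> else 0) = 0"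
          by (subst sum_nonneg_eq_0_iff[symmetric]) auto
        hence "(if S0 $$ (i,j) = 0 then \<bar>H $$ (i,j)\<bar> else 0) = 0" using \<open>j < n\<close> by blast
        thus ?thesis using \<open>S0 $$ (i,j) = 0\<close> by simp
      qed
      have ptH: "pt n U V H = H"
      proof -
        have "H = pt n U V H + 0\<^sub>m n n" using pt_perp_sum[OF U V Hc] M0 unfolding M_def by simp
        thus ?thesis using pt_carrier[OF U V Hc] by simp
      qed
      have oH: "P_Omega n (support n S0) H = H"
        unfolding P_Omega_def by (rule eq_matI) (use Hc Hz in \<open>auto simp: support_def\<close>)
      have "H = 0\<^sub>m n n" by (rule op_contra[OF U V UO VO Hc ptH oH op])
      hence "L = L0" unfolding Leq using L0c by simp
      moreover have "S = S0" by (rule eq_matI) (use Sent \<open>H = 0\<^sub>m n n\<close> Sc' S0c in auto)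
      ultimately show False using ne by simp
    qed
  qed
qed

end
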